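(* Let $A$ be a partial ring, $X=X_A$ with sheaf $\mathcal{O}_X$, and $x=\mathfrak{p}\in X_A$. Then the stalk $\mathcal{O}_{X,x}$ of $\mathcal{O}_X$ at $x$ coincides with the localization $A_{\mathfrak{p}}$.
   Context: A partial ring is a set $A$ with $0$, a set $A_2\subseteq A\times A$ of summable pairs and a partial addition $+\colon A_2\to A$ (with $0$ a unit summable with everything, commutative, and associative in the sense: $(a,b),(a+b,c)\in A_2$ iff $(b,c),(a,b+c)\in A_2$, and then $(a+b)+c=a+(b+c)$), together with a commutative associative multiplication with unit $1$ such that $0\cdot a=0$ and $(a_1,a_2)\in A_2\Rightarrow(a_1x,a_2x)\in A_2$, $(a_1+a_2)x=a_1x+a_2x$. Ideals and prime ideals are defined as for rings (an ideal is a subset $I\ni 0$ closed under sums of summable pairs of its elements and with $AI\subseteq I$; prime: $I\ne A$ and $ab\in I\Rightarrow a\in I$ or $b\in I$). For a multiplicative subset $S$ (containing $1$, closed under products), $S^{-1}A$ is the set of classes $a/s$ ($a\in A,s\in S$) with $a/s=b/t$ iff $uta=usb$ for some $u\in S$, multiplication $\frac{a}{s}\frac{b}{t}=\frac{ab}{st}$, and $(a/s,b/t)$ summable iff $(uta,usb)\in A_2$ for some $u\in S$; $A_{\mathfrak p}=(A\setminus\mathfrak p)^{-1}A$. $X_A$ is the set of prime ideals with the topology generated by $D(a)=\{\mathfrak p: a\notin\mathfrak p\}$. For an open $U\subseteq X_A$, $S_U=\{a\in A: a\notin\mathfrak p\text{ for all }\mathfrak p\in U\}$; $U\mapsto S_U^{-1}A$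 is a presheaf of partial rings $\mathcal{O}'_X$, and $\mathcal{O}_X$ is its sheafification. *)

theory Defs
  imports "HOL-Analysis.Analysis"
begin

record 'a pring =
  pcarrier :: "'a set"
  pzero :: 'a
  pone :: 'a
  psummable :: "'a \<Rightarrow> 'a \<Rightarrow> bool"
  padd :: "'a \<Rightarrow> 'a \<Rightarrow> 'a"
  pmul :: "'a \<Rightarrow> 'a \<Rightarrow> 'a"

definition partial_ring :: "'a pring \<Rightarrow> bool" where
  "partial_ring R \<longleftrightarrow>
     pzero R \<in> pcarrier R \<and> pone R \<in> pcarrier R
   \<and> (\<forall>a b. psummable R a b \<longrightarrow> a \<in> pcarrier R \<and> b \<in> pcarrier R \<and> padd R a b \<in> pcarrier R)
   \<and> (\<forall>a\<in>pcarrier R. \<forall>b\<in>pcarrier R. pmul R a b \<in> pcarrier R)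
   \<and> (\<forall>a\<in>pcarrier R. psummable R (pzero R) a \<and> padd R (pzero R) a = a)
   \<and> (\<forall>a b. psummable R a b \<longrightarrow> psummable R b a \<and> padd R a b = padd R b a)
   \<and> (\<forall>a\<in>pcarrier R. \<forall>b\<in>pcarrier R. \<forall>c\<in>pcarrier R.
        ((psummable R a b \<and> psummable R (padd R a b) c) \<longleftrightarrow>
         (psummable R b c \<and> psummable R a (padd R b c)))
      \<and> (psummable R a b \<and> psummable R (padd R a b) c \<longrightarrow>
         padd R (padd R a b) c = padd R a (padd R b c)))
   \<and> (\<forall>a\<in>pcarrier R. \<forall>b\<in>pcarrier R. pmul R a b = pmul R b a)
   \<and> (\<forall>a\<in>pcarrier R. \<forall>b\<in>pcarrier R. \<forall>c\<in>pcarrier R.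
        pmul R (pmul R a b) c = pmul R a (pmul R b c))
   \<and> (\<forall>a\<in>pcarrier R. pmul R (pone R) a = a)
   \<and> (\<forall>a\<in>pcarrier R. pmul R (pzero R) a = pzero R)
   \<and> (\<forall>a1 a2. \<forall>x\<in>pcarrier R. psummable R a1 a2 \<longrightarrow>
        psummable R (pmul R a1 x) (pmul R a2 x)
      \<and> pmul R (padd R a1 a2) x = padd R (pmul R a1 x) (pmul R a2 x))"

definition pring_hom :: "'a pring \<Rightarrow> 'b pring \<Rightarrow> ('a \<Rightarrow> 'b) \<Rightarrow> bool" where
  "pring_hom R R' f \<longleftrightarrow>
     f ` pcarrier R \<subseteq> pcarrier R'
   \<and> f (pzero R) = pzero R' \<and> f (pone R) = pone R'
   \<and> (\<forall>a\<in>pcarrier R. \<forall>b\<in>pcarrier R. f (pmul R a b) = pmul R' (f a) (f b))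
   \<and> (\<forall>a b. psummable R a b \<longrightarrow>
        psummable R' (f a) (f b) \<and> f (padd R a b) = padd R' (f a) (f b))"

definition pring_iso :: "'a pring \<Rightarrow> 'b pring \<Rightarrow> ('a \<Rightarrow> 'b) \<Rightarrow> bool" where
  "pring_iso R R' f \<longleftrightarrow>
     pring_hom R R' f \<and> bij_betw f (pcarrier R) (pcarrier R')
   \<and> (\<forall>a\<in>pcarrier R. \<forall>b\<in>pcarrier R. psummable R' (f a) (f b) \<longrightarrow> psummable R a b)"

definition pideal :: "'a pring \<Rightarrow> 'a set \<Rightarrow> bool" where
  "pideal R I \<longleftrightarrow> I \<subseteq> pcarrier R \<and> pzero R \<in> I
   \<and> (\<forall>a\<in>I. \<forall>b\<in>I. psummable R a b \<longrightarrow> padd R a b \<in> I)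
   \<and> (\<forall>a\<in>pcarrier R. \<forall>i\<in>I. pmul R a i \<in> I)"

definition pprime :: "'a pring \<Rightarrow> 'a set \<Rightarrow> bool" where
  "pprime R P \<longleftrightarrow> pideal R P \<and> P \<noteq> pcarrier R
   \<and> (\<forall>a\<in>pcarrier R. \<forall>b\<in>pcarrier R. pmul R a b \<in> P \<longrightarrow> a \<in> P \<or> b \<in> P)"

definition spec :: "'a pring \<Rightarrow> 'a set set" where
  "spec R = {P. pprime R P}"

definition basic_open :: "'a pring \<Rightarrow> 'a \<Rightarrow> 'a set set" where
  "basic_open R a = {P \<in> spec R. a \<notin> P}"

definition zariski :: "'a pring \<Rightarrow> 'a set topology" where
  "zariski R = topology_generated_by (basic_open R ` pcarrier R)"

definition loc_rel :: "'a pring \<Rightarrow> 'a set \<Rightarrow> (('a \<times> 'a) \<times> ('a \<times> 'a)) set" where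
  "loc_rel R S = {((a, s), (b, t)). a \<in> pcarrier R \<and> s \<in> S \<and> b \<in> pcarrier R \<and> t \<in> S
      \<and> (\<exists>u\<in>S. pmul R u (pmul R t a) = pmul R u (pmul R s b))}"

definition frac :: "'a pring \<Rightarrow> 'a set \<Rightarrow> 'a \<Rightarrow> 'a \<Rightarrow> ('a \<times> 'a) set" where
  "frac R S a s = loc_rel R S `` {(a, s)}"

definition localization :: "'a pring \<Rightarrow> 'a set \<Rightarrow> ('a \<times> 'a) set pring" where
  "localization R S = \<lparr>
     pcarrier = {frac R S a s | a s. a \<in> pcarrier R \<and> s \<in> S},
     pzero = frac R S (pzero R) (pone R),
     pone = frac R S (pone R) (pone R),
     psummable = (\<lambda>X Y. \<exists>a s b t u. X = frac R S a s \<and> Y = frac R S b t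
        \<and> a \<in> pcarrier R \<and> s \<in> S \<and> b \<in> pcarrier R \<and> t \<in> S \<and> u \<in> S
        \<and> psummable R (pmul R u (pmul R t a)) (pmul R u (pmul R s b))),
     padd = (\<lambda>X Y. SOME Z. \<exists>a s b t u. X = frac R S a s \<and> Y = frac R S b t
        \<and> a \<in> pcarrier R \<and> s \<in> S \<and> b \<in> pcarrier R \<and> t \<in> S \<and> u \<in> S
        \<and> psummable R (pmul R u (pmul R t a)) (pmul R u (pmul R s b))
        \<and> Z = frac R S (padd R (pmul R u (pmul R t a)) (pmul R u (pmul R s b)))
                        (pmul R u (pmul R s t))),
     pmul = (\<lambda>X Y. SOME Z. \<exists>a s b t. X = frac R S a s \<and> Y = frac R S b t
        \<and> a \<in> pcarrier R \<and> s \<in> S \<and> b \<in> pcarrier R \<and> t \<in> S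
        \<and> Z = frac R S (pmul R a b) (pmul R s t)) \<rparr>"

text \<open>A presheaf of partial rings on a topology T is given by its rings of sections
  F U (for open U) and restriction maps res U V (for V \<subseteq> U).\<close>

definition germ_rel :: "'o topology \<Rightarrow> ('o set \<Rightarrow> 'e pring) \<Rightarrow> ('o set \<Rightarrow> 'o set \<Rightarrow> 'e \<Rightarrow> 'e)
    \<Rightarrow> 'o \<Rightarrow> (('o set \<times> 'e) \<times> ('o set \<times> 'e)) set" where
  "germ_rel T F res x = {((U, s), (V, t)).
      openin T U \<and> x \<in> U \<and> s \<in> pcarrier (F U) \<and> openin T V \<and> x \<in> V \<and> t \<in> pcarrier (F V)
    \<and> (\<exists>W. openin T W \<and> x \<in> W \<and> W \<subseteq> U \<inter> V \<and> res U W s = res V W t)}"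

definition germ :: "'o topology \<Rightarrow> ('o set \<Rightarrow> 'e pring) \<Rightarrow> ('o set \<Rightarrow> 'o set \<Rightarrow> 'e \<Rightarrow> 'e)
    \<Rightarrow> 'o \<Rightarrow> 'o set \<Rightarrow> 'e \<Rightarrow> ('o set \<times> 'e) set" where
  "germ T F res x U s = germ_rel T F res x `` {(U, s)}"

definition stalk :: "'o topology \<Rightarrow> ('o set \<Rightarrow> 'e pring) \<Rightarrow> ('o set \<Rightarrow> 'o set \<Rightarrow> 'e \<Rightarrow> 'e)
    \<Rightarrow> 'o \<Rightarrow> ('o set \<times> 'e) set pring" where
  "stalk T F res x = \<lparr>
     pcarrier = {germ T F res x U s | U s. openin T U \<and> x \<in> U \<and> s \<in> pcarrier (F U)},
     pzero = germ T F res x (topspace T) (pzero (F (topspace T))),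
     pone = germ T F res x (topspace T) (pone (F (topspace T))),
     psummable = (\<lambda>G H. \<exists>U s V t W. G = germ T F res x U s \<and> H = germ T F res x V t
        \<and> openin T U \<and> x \<in> U \<and> s \<in> pcarrier (F U) \<and> openin T V \<and> x \<in> V \<and> t \<in> pcarrier (F V)
        \<and> openin T W \<and> x \<in> W \<and> W \<subseteq> U \<inter> V
        \<and> psummable (F W) (res U W s) (res V W t)),
     padd = (\<lambda>G H. SOME K. \<exists>U s V t W. G = germ T F res x U s \<and> H = germ T F res x V t
        \<and> openin T U \<and> x \<in> U \<and> s \<in> pcarrier (F U) \<and> openin T V \<and> x \<in> V \<and> t \<in> pcarrier (F V)
        \<and> openin T W \<and> x \<in> W \<and> W \<subseteq> U \<inter> V
        \<and> psummable (F W) (res U W s) (res V W t)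
        \<and> K = germ T F res x W (padd (F W) (res U W s) (res V W t))),
     pmul = (\<lambda>G H. SOME K. \<exists>U s V t. G = germ T F res x U s \<and> H = germ T F res x V t
        \<and> openin T U \<and> x \<in> U \<and> s \<in> pcarrier (F U) \<and> openin T V \<and> x \<in> V \<and> t \<in> pcarrier (F V)
        \<and> K = germ T F res x (U \<inter> V) (pmul (F (U \<inter> V)) (res U (U \<inter> V) s) (res V (U \<inter> V) t))) \<rparr>"

text \<open>Outside U sections are fixed to the empty set.\<close>

definition sheafify :: "'o topology \<Rightarrow> ('o set \<Rightarrow> 'e pring) \<Rightarrow> ('o set \<Rightarrow> 'o set \<Rightarrow> 'e \<Rightarrow> 'e)
    \<Rightarrow> 'o set \<Rightarrow> ('o \<Rightarrow> ('o set \<times> 'e) set) pring" where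
  "sheafify T F res U = \<lparr>
     pcarrier = {\<sigma>. (\<forall>q. q \<notin> U \<longrightarrow> \<sigma> q = {})
        \<and> (\<forall>q\<in>U. \<exists>V t. openin T V \<and> q \<in> V \<and> V \<subseteq> U \<and> t \<in> pcarrier (F V)
               \<and> (\<forall>r\<in>V. \<sigma> r = germ T F res r V t))},
     pzero = (\<lambda>q. if q \<in> U then pzero (stalk T F res q) else {}),
     pone = (\<lambda>q. if q \<in> U then pone (stalk T F res q) else {}),
     psummable = (\<lambda>\<sigma> \<tau>. \<forall>q\<in>U. psummable (stalk T F res q) (\<sigma> q) (\<tau> q)),
     padd = (\<lambda>\<sigma> \<tau> q. if q \<in> U then padd (stalk T F res q) (\<sigma> q) (\<tau> q) else {}),
     pmul = (\<lambda>\<sigma> \<tau> q. if q \<in> U then pmul (stalk T F res q) (\<sigma> q) (\<tau> q) else {}) \<rparr>"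

definition sheafify_res :: "'o set \<Rightarrow> 'o set \<Rightarrow> ('o \<Rightarrow> 'g set) \<Rightarrow> ('o \<Rightarrow> 'g set)" where
  "sheafify_res U V \<sigma> = (\<lambda>q. if q \<in> V then \<sigma> q else {})"

definition S_open :: "'a pring \<Rightarrow> 'a set set \<Rightarrow> 'a set" where
  "S_open R U = {a \<in> pcarrier R. \<forall>P\<in>U. a \<notin> P}"

definition struct_presheaf :: "'a pring \<Rightarrow> 'a set set \<Rightarrow> ('a \<times> 'a) set pring" where
  "struct_presheaf R U = localization R (S_open R U)"

text \<open>Restriction O'(U) \<rightarrow> O'(V): the class of a/s w.r.t. S_U goes to the class of a/s
  w.r.t. S_V.\<close>
definition struct_presheaf_res :: "'a pring \<Rightarrow> 'a set set \<Rightarrow> 'a set set \<Rightarrow> ('a \<times> 'a) set \<Rightarrow> ('a \<times> 'a) set" where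
  "struct_presheaf_res R U V c = loc_rel R (S_open R V) `` c"

definition struct_sheaf where
  "struct_sheaf R = sheafify (zariski R) (struct_presheaf R) (struct_presheaf_res R)"

definition struct_stalk where
  "struct_stalk R x = stalk (zariski R) (struct_sheaf R) sheafify_res x"

end

theory Submission
  imports Defs
begin


lemma germ_rel_mem: "((U, s), (V, t)) \<in> germ_rel T F res x \<longleftrightarrow>
      openin T U \<and> x \<in> U \<and> s \<in> pcarrier (F U) \<and> openin T V \<and> x \<in> V \<and> t \<in> pcarrier (F V)
    \<and> (\<exists>W. openin T W \<and> x \<in> W \<and> W \<subseteq> U \<inter> V \<and> res U W s = res V W t)"
  unfolding germ_rel_def by simp

lemma germ_eq_iff:
  assumes func: "\<And>U W1 W s. openin T U \<Longrightarrow> openin T W1 \<Longrightarrow> openin T W \<Longrightarrow> W \<subseteq> W1 \<Longrightarrow> W1 \<subseteq> U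
      \<Longrightarrow> s \<in> pcarrier (F U) \<Longrightarrow> res W1 W (res U W1 s) = res U W s"
  and U: "openin T U" "x \<in> U" "s \<in> pcarrier (F U)"
  and V: "openin T V" "x \<in> V" "t \<in> pcarrier (F V)"
  shows "germ T F res x U s = germ T F res x V t \<longleftrightarrow>
         (\<exists>W. openin T W \<and> x \<in> W \<and> W \<subseteq> U \<inter> V \<and> res U W s = res V W t)"
proof -
  have trans: "((U1, s1), (U3, s3)) \<in> germ_rel T F res x"
    if "((U1, s1), (U2, s2)) \<in> germ_rel T F res x" "((U2, s2), (U3, s3)) \<in> germ_rel T F res x"
    for U1 s1 U2 s2 U3 s3
  proof -
    from that obtain W1 W2 where h: "openin T U1" "x \<in> U1" "s1 \<in> pcarrier (F U1)"
      "openin T U2" "x \<in> U2" "s2 \<in> pcarrier (F U2)" "openin T U3" "x \<in> U3" "s3 \<in> pcarrier (F U3)"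
      and w1: "openin T W1" "x \<in> W1" "W1 \<subseteq> U1 \<inter> U2" "res U1 W1 s1 = res U2 W1 s2"
      and w2: "openin T W2" "x \<in> W2" "W2 \<subseteq> U2 \<inter> U3" "res U2 W2 s2 = res U3 W2 s3"
      unfolding germ_rel_mem by blast
    define W where "W = W1 \<inter> W2"
    have W: "openin T W" "x \<in> W" "W \<subseteq> U1 \<inter> U3" unfolding W_def using w1 w2 by auto
    have "res U1 W s1 = res W1 W (res U1 W1 s1)"
      using func[of U1 W1 W s1] h w1 W unfolding W_def by auto
    also have "\<dots> = res W1 W (res U2 W1 s2)" using w1 by simp
    also have "\<dots> = res U2 W s2" using func[of U2 W1 W s2] h w1 W unfolding W_def by auto
    also have "\<dots> = res W2 W (res U2 W2 s2)" using func[of U2 W2 W s2] h w2 W unfolding W_def by auto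
    also have "\<dots> = res W2 W (res U3 W2 s3)" using w2 by simp
    also have "\<dots> = res U3 W s3" using func[of U3 W2 W s3] h w2 W unfolding W_def by auto
    finally show ?thesis unfolding germ_rel_mem using h W by blast
  qed
  have sym: "((U2, s2), (U1, s1)) \<in> germ_rel T F res x"
    if "((U1, s1), (U2, s2)) \<in> germ_rel T F res x" for U1 s1 U2 s2
    using that unfolding germ_rel_mem by (metis inf_commute)
  have refl: "((U, s), (U, s)) \<in> germ_rel T F res x" unfolding germ_rel_mem using U by blast
  show ?thesis
  proof
    assume "germ T F res x U s = germ T F res x V t"
    then have "(U, s) \<in> germ_rel T F res x `` {(V, t)}" using refl unfolding germ_def by blast
    then have "((U, s), (V, t)) \<in> germ_rel T F res x" using sym by blast
    then show "\<exists>W. openin T W \<and> x \<in> W \<and> W \<subseteq> U \<inter> V \<and> res U W s = res V W t"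
      unfolding germ_rel_mem by blast
  next
    assume "\<exists>W. openin T W \<and> x \<in> W \<and> W \<subseteq> U \<inter> V \<and> res U W s = res V W t"
    then have uv: "((U, s), (V, t)) \<in> germ_rel T F res x" unfolding germ_rel_mem using U V by blast
    show "germ T F res x U s = germ T F res x V t"
      unfolding germ_def
    proof (intro equalityI subsetI)
      fix y assume "y \<in> germ_rel T F res x `` {(U, s)}"
      then have "((U, s), y) \<in> germ_rel T F res x" by blast
      then have "((V, t), y) \<in> germ_rel T F res x" using sym[OF uv] trans by (cases y) blast
      then show "y \<in> germ_rel T F res x `` {(V, t)}" by blast
    next
      fix y assume "y \<in> germ_rel T F res x `` {(V, t)}"
      then have "((V, t), y) \<in> germ_rel T F res x" by blast
      then have "((U, s), y) \<in> germ_rel T F res x" using uv trans by (cases y) blast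
      then show "y \<in> germ_rel T F res x `` {(U, s)}" by blast
    qed
  qed
qed

lemma some_eqI: "(\<exists>x. P x) \<Longrightarrow> (\<And>x. P x \<Longrightarrow> x = c) \<Longrightarrow> (SOME x. P x) = c"
  by (metis someI_ex)

locale pr =
  fixes R :: "'a pring"
  assumes PR: "partial_ring R"
begin

abbreviation A where "A \<equiv> pcarrier R"
abbreviation mul (infixl "\<odot>" 70) where "x \<odot> y \<equiv> pmul R x y"
abbreviation add (infixl "\<oplus>" 65) where "x \<oplus> y \<equiv> padd R x y"
abbreviation summ where "summ x y \<equiv> psummable R x y"
abbreviation one where "one \<equiv> pone R"
abbreviation zero where "zero \<equiv> pzero R"

lemma c1: "pzero R \<in> pcarrier R"
  using PR unfolding partial_ring_def by (elim conjE) assumption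
lemma c2: "pone R \<in> pcarrier R"
  using PR unfolding partial_ring_def by (elim conjE) assumption
lemma c3: "\<forall>a b. psummable R a b \<longrightarrow> a \<in> pcarrier R \<and> b \<in> pcarrier R \<and> padd R a b \<in> pcarrier R"
  using PR unfolding partial_ring_def by (elim conjE) assumption
lemma c4: "\<forall>a\<in>pcarrier R. \<forall>b\<in>pcarrier R. pmul R a b \<in> pcarrier R"
  using PR unfolding partial_ring_def by (elim conjE) assumption
lemma c8: "\<forall>a\<in>pcarrier R. \<forall>b\<in>pcarrier R. pmul R a b = pmul R b a"
  using PR unfolding partial_ring_def by (elim conjE) assumption
lemma c9: "\<forall>a\<in>pcarrier R. \<forall>b\<in>pcarrier R. \<forall>c\<in>pcarrier R.
        pmul R (pmul R a b) c = pmul R a (pmul R b c)"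
  using PR unfolding partial_ring_def by (elim conjE) assumption
lemma c10: "\<forall>a\<in>pcarrier R. pmul R (pone R) a = a"
  using PR unfolding partial_ring_def by (elim conjE) assumption
lemma c11: "\<forall>a\<in>pcarrier R. pmul R (pzero R) a = pzero R"
  using PR unfolding partial_ring_def by (elim conjE) assumption
lemma c12: "\<forall>a1 a2. \<forall>x\<in>pcarrier R. psummable R a1 a2 \<longrightarrow>
        psummable R (pmul R a1 x) (pmul R a2 x)
      \<and> pmul R (padd R a1 a2) x = padd R (pmul R a1 x) (pmul R a2 x)"
  using PR unfolding partial_ring_def by (elim conjE) assumption

lemma zero_in[simp]: "zero \<in> A" and one_in[simp]: "one \<in> A"
  using c1 c2 by auto

lemma summ_in: "summ a b \<Longrightarrow> a \<in> A \<and> b \<in> A \<and> a \<oplus> b \<in> A"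
  using c3 by blast

lemma mul_in[simp]: "a \<in> A \<Longrightarrow> b \<in> A \<Longrightarrow> a \<odot> b \<in> A"
  using c4 by blast

lemma mul_comm: "a \<in> A \<Longrightarrow> b \<in> A \<Longrightarrow> a \<odot> b = b \<odot> a"
  using c8 by blast

lemma mul_assoc: "a \<in> A \<Longrightarrow> b \<in> A \<Longrightarrow> c \<in> A \<Longrightarrow> (a \<odot> b) \<odot> c = a \<odot> (b \<odot> c)"
  using c9 by blast

lemma mul_lcomm: "a \<in> A \<Longrightarrow> b \<in> A \<Longrightarrow> c \<in> A \<Longrightarrow> a \<odot> (b \<odot> c) = b \<odot> (a \<odot> c)"
proof -
  assume h: "a \<in> A" "b \<in> A" "c \<in> A"
  have "a \<odot> (b \<odot> c) = (a \<odot> b) \<odot> c" using mul_assoc[OF h] by simp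
  also have "\<dots> = (b \<odot> a) \<odot> c" using mul_comm[OF h(1,2)] by simp
  also have "\<dots> = b \<odot> (a \<odot> c)" using mul_assoc[OF h(2,1,3)] by simp
  finally show ?thesis .
qed

lemmas mac = mul_assoc mul_comm mul_lcomm

lemma one_mul[simp]: "a \<in> A \<Longrightarrow> one \<odot> a = a"
  using c10 by blast

lemma zero_mul[simp]: "a \<in> A \<Longrightarrow> zero \<odot> a = zero"
  using c11 by blast

lemma mul_one[simp]: "a \<in> A \<Longrightarrow> a \<odot> one = a"
  using one_mul mul_comm by simp

lemma summ_mul: "summ a b \<Longrightarrow> x \<in> A \<Longrightarrow> summ (a \<odot> x) (b \<odot> x)"
  using c12 by blast

lemma add_mul: "summ a b \<Longrightarrow> x \<in> A \<Longrightarrow> (a \<oplus> b) \<odot> x = a \<odot> x \<oplus> b \<odot> x"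
  using c12 by blast

lemma mul_add: "summ a b \<Longrightarrow> x \<in> A \<Longrightarrow> x \<odot> (a \<oplus> b) = x \<odot> a \<oplus> x \<odot> b"
proof -
  assume s: "summ a b" and x: "x \<in> A"
  then have "a \<in> A" "b \<in> A" "a \<oplus> b \<in> A" using summ_in by auto
  then have "x \<odot> (a \<oplus> b) = (a \<oplus> b) \<odot> x" using mul_comm x by blast
  also have "\<dots> = a \<odot> x \<oplus> b \<odot> x" using add_mul[OF s x] .
  also have "\<dots> = x \<odot> a \<oplus> x \<odot> b" using mul_comm[of a x] mul_comm[of b x] x \<open>a \<in> A\<close> \<open>b \<in> A\<close> by simp
  finally show ?thesis .
qed

definition mset where
  "mset S \<longleftrightarrow> S \<subseteq> A \<and> one \<in> S \<and> (\<forall>x\<in>S. \<forall>y\<in>S. x \<odot> y \<in> S)"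

lemma msetD: assumes "mset S" shows "S \<subseteq> A" "one \<in> S" "\<And>x y. x \<in> S \<Longrightarrow> y \<in> S \<Longrightarrow> x \<odot> y \<in> S"
  using assms unfolding mset_def by auto

lemma mset_in: "mset S \<Longrightarrow> x \<in> S \<Longrightarrow> x \<in> A"
  using msetD by blast

lemma loc_rel_mem: "((a, s), (b, t)) \<in> loc_rel R S \<longleftrightarrow> a \<in> A \<and> s \<in> S \<and> b \<in> A \<and> t \<in> S
      \<and> (\<exists>u\<in>S. u \<odot> (t \<odot> a) = u \<odot> (s \<odot> b))"
  unfolding loc_rel_def by simp

lemma loc_equiv: assumes M: "mset S" shows "equiv (A \<times> S) (loc_rel R S)"
proof (rule equivI)
  have SA: "S \<subseteq> A" using msetD[OF M] by auto
  show "loc_rel R S \<subseteq> (A \<times> S) \<times> A \<times> S"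
  proof (rule subrelI)
    fix x y assume "(x, y) \<in> loc_rel R S"
    then show "(x, y) \<in> (A \<times> S) \<times> A \<times> S" by (cases x, cases y) (simp add: loc_rel_mem)
  qed
  show "refl_on (A \<times> S) (loc_rel R S)"
  proof (rule refl_onI)
    fix x assume "x \<in> A \<times> S"
    then show "(x, x) \<in> loc_rel R S" using msetD(2)[OF M] by (cases x) (auto simp: loc_rel_mem)
  qed
  show "sym (loc_rel R S)"
    unfolding sym_def loc_rel_mem
  proof (intro allI impI)
    fix x y assume "(x, y) \<in> loc_rel R S"
    then show "(y, x) \<in> loc_rel R S" by (cases x, cases y) (auto simp: loc_rel_mem dest: sym)
  qed
  show "trans (loc_rel R S)"
  proof (rule transI)
    fix x y z assume xy: "(x, y) \<in> loc_rel R S" and yz: "(y, z) \<in> loc_rel R S"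
    obtain a s where x: "x = (a, s)" by fastforce
    obtain b t where y: "y = (b, t)" by fastforce
    obtain c r where z: "z = (c, r)" by fastforce
    from xy obtain u where u: "u \<in> S" "u \<odot> (t \<odot> a) = u \<odot> (s \<odot> b)" and
      ins: "a \<in> A" "s \<in> S" "b \<in> A" "t \<in> S"
      unfolding x y loc_rel_mem by blast
    from yz obtain v where v: "v \<in> S" "v \<odot> (r \<odot> b) = v \<odot> (t \<odot> c)" and
      ins2: "c \<in> A" "r \<in> S"
      unfolding z y loc_rel_mem by blast
    have AA: "u \<in> A" "v \<in> A" "s \<in> A" "t \<in> A" "r \<in> A" using u v ins ins2 SA by auto
    have "(u \<odot> v \<odot> t) \<odot> (r \<odot> a) = (u \<odot> (t \<odot> a)) \<odot> (v \<odot> r)"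
      using AA ins by (simp add: mac)
    also have "\<dots> = (u \<odot> (s \<odot> b)) \<odot> (v \<odot> r)" using u by simp
    also have "\<dots> = (v \<odot> (r \<odot> b)) \<odot> (u \<odot> s)"
      using AA ins by (simp add: mac)
    also have "\<dots> = (v \<odot> (t \<odot> c)) \<odot> (u \<odot> s)" using v by simp
    also have "\<dots> = (u \<odot> v \<odot> t) \<odot> (s \<odot> c)"
      using AA ins ins2 by (simp add: mac)
    finally have "(u \<odot> v \<odot> t) \<odot> (r \<odot> a) = (u \<odot> v \<odot> t) \<odot> (s \<odot> c)" .
    moreover have "u \<odot> v \<odot> t \<in> S" using msetD(3)[OF M] u v ins by auto
    ultimately show "(x, z) \<in> loc_rel R S"
      unfolding x z loc_rel_mem using ins ins2 by blast
  qed
qed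

lemma frac_eq: assumes M: "mset S" and "a \<in> A" "s \<in> S" "b \<in> A" "t \<in> S"
  shows "frac R S a s = frac R S b t \<longleftrightarrow> (\<exists>u\<in>S. u \<odot> (t \<odot> a) = u \<odot> (s \<odot> b))"
  unfolding frac_def using eq_equiv_class_iff[OF loc_equiv[OF M], of "(a,s)" "(b,t)"] assms
  by (simp add: loc_rel_mem)

lemma frac_eqI: assumes M: "mset S" and "a \<in> A" "s \<in> S" "b \<in> A" "t \<in> S"
   "u \<in> S" "u \<odot> (t \<odot> a) = u \<odot> (s \<odot> b)"
  shows "frac R S a s = frac R S b t"
  using frac_eq[OF assms(1-5)] assms(6,7) by blast

lemma frac_res: assumes M: "mset S" "mset S'" "S \<subseteq> S'" "a \<in> A" "s \<in> S"
  shows "loc_rel R S' `` frac R S a s = frac R S' a s"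
proof -
  have sub: "loc_rel R S \<subseteq> loc_rel R S'"
    using assms(3) unfolding loc_rel_def by blast
  have e: "equiv (A \<times> S) (loc_rel R S)" "equiv (A \<times> S') (loc_rel R S')"
    using loc_equiv M by auto
  show ?thesis
  proof
    show "loc_rel R S' `` frac R S a s \<subseteq> frac R S' a s"
    proof
      fix y assume "y \<in> loc_rel R S' `` frac R S a s"
      then obtain x where x: "((a, s), x) \<in> loc_rel R S" "(x, y) \<in> loc_rel R S'"
        unfolding frac_def by blast
      have "((a, s), x) \<in> loc_rel R S'" using x(1) sub by blast
      then have "((a, s), y) \<in> loc_rel R S'"
        using x(2) e(2) by (meson equivE transD)
      then show "y \<in> frac R S' a s" unfolding frac_def by blast
    qed
    show "frac R S' a s \<subseteq> loc_rel R S' `` frac R S a s"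
      unfolding frac_def using equiv_class_self[OF e(1), of "(a,s)"] assms by blast
  qed
qed

lemma frac_mono: assumes M: "S \<subseteq> S'" "frac R S a s = frac R S b t" "mset S" "mset S'"
   "a \<in> A" "s \<in> S" "b \<in> A" "t \<in> S"
  shows "frac R S' a s = frac R S' b t"
  using assms frac_eq by (meson subsetD)

lemma loc_carrier: "pcarrier (localization R S) = {frac R S a s | a s. a \<in> A \<and> s \<in> S}"
  unfolding localization_def by simp

lemma loc_zero: "pzero (localization R S) = frac R S zero one"
  and loc_one: "pone (localization R S) = frac R S one one"
  unfolding localization_def by simp_all

lemma loc_summable_def: "psummable (localization R S) X Y \<longleftrightarrow> (\<exists>a s b t u. X = frac R S a s \<and> Y = frac R S b t
        \<and> a \<in> A \<and> s \<in> S \<and> b \<in> A \<and> t \<in> S \<and> u \<in> S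
        \<and> summ (u \<odot> (t \<odot> a)) (u \<odot> (s \<odot> b)))"
  unfolding localization_def by simp

lemma loc_mul: assumes M: "mset S" and ins: "a \<in> A" "s \<in> S" "b \<in> A" "t \<in> S"
  shows "pmul (localization R S) (frac R S a s) (frac R S b t) = frac R S (a \<odot> b) (s \<odot> t)"
proof -
  have SA: "S \<subseteq> A" using msetD[OF M] by auto
  have AA: "s \<in> A" "t \<in> A" using ins SA by auto
  show ?thesis
    unfolding localization_def pring.simps
  proof (rule someI2, (intro exI conjI; (rule refl)?; fact?), elim exE conjE)
    fix Z a2 s2 b2 t2
    assume e1: "frac R S a s = frac R S a2 s2" and e2: "frac R S b t = frac R S b2 t2"
      and i2: "a2 \<in> A" "s2 \<in> S" "b2 \<in> A" "t2 \<in> S" and Z: "Z = frac R S (a2 \<odot> b2) (s2 \<odot> t2)"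
    obtain v1 where v1: "v1 \<in> S" "v1 \<odot> (s2 \<odot> a) = v1 \<odot> (s \<odot> a2)"
      using frac_eq[OF M ins(1,2) i2(1,2)] e1 by blast
    obtain v2 where v2: "v2 \<in> S" "v2 \<odot> (t2 \<odot> b) = v2 \<odot> (t \<odot> b2)"
      using frac_eq[OF M ins(3,4) i2(3,4)] e2 by blast
    have AB: "v1 \<in> A" "v2 \<in> A" "s2 \<in> A" "t2 \<in> A" using v1 v2 i2 SA by auto
    have "(v1 \<odot> v2) \<odot> ((s \<odot> t) \<odot> (a2 \<odot> b2)) = (v1 \<odot> (s \<odot> a2)) \<odot> (v2 \<odot> (t \<odot> b2))"
      using AA AB ins i2 by (simp add: mac)
    also have "\<dots> = (v1 \<odot> (s2 \<odot> a)) \<odot> (v2 \<odot> (t2 \<odot> b))" using v1 v2 by simp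
    also have "\<dots> = (v1 \<odot> v2) \<odot> ((s2 \<odot> t2) \<odot> (a \<odot> b))"
      using AA AB ins i2 by (simp add: mac)
    finally have eq: "(v1 \<odot> v2) \<odot> ((s \<odot> t) \<odot> (a2 \<odot> b2)) = (v1 \<odot> v2) \<odot> ((s2 \<odot> t2) \<odot> (a \<odot> b))" .
    show "Z = frac R S (a \<odot> b) (s \<odot> t)" unfolding Z
      by (rule frac_eqI[OF M _ _ _ _ _ eq]) (auto simp: ins i2 AA AB intro: msetD(3)[OF M] v1 v2)
  qed
qed


lemma loc_summ: assumes M: "mset S" and ins: "a \<in> A" "s \<in> S" "b \<in> A" "t \<in> S"
  shows "psummable (localization R S) (frac R S a s) (frac R S b t) \<longleftrightarrow>
         (\<exists>u\<in>S. summ (u \<odot> (t \<odot> a)) (u \<odot> (s \<odot> b)))"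
proof
  assume "\<exists>u\<in>S. summ (u \<odot> (t \<odot> a)) (u \<odot> (s \<odot> b))"
  then show "psummable (localization R S) (frac R S a s) (frac R S b t)"
    unfolding loc_summable_def using ins by blast
next
  have SA: "S \<subseteq> A" using msetD[OF M] by auto
  have AA: "s \<in> A" "t \<in> A" using ins SA by auto
  assume "psummable (localization R S) (frac R S a s) (frac R S b t)"
  then obtain a2 s2 b2 t2 u2 where e1: "frac R S a s = frac R S a2 s2" and e2: "frac R S b t = frac R S b2 t2"
      and i2: "a2 \<in> A" "s2 \<in> S" "b2 \<in> A" "t2 \<in> S" "u2 \<in> S"
      and sm: "summ (u2 \<odot> (t2 \<odot> a2)) (u2 \<odot> (s2 \<odot> b2))"
    unfolding loc_summable_def by blast
  obtain v1 where v1: "v1 \<in> S" "v1 \<odot> (s2 \<odot> a) = v1 \<odot> (s \<odot> a2)"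
    using frac_eq[OF M ins(1,2) i2(1,2)] e1 by blast
  obtain v2 where v2: "v2 \<in> S" "v2 \<odot> (t2 \<odot> b) = v2 \<odot> (t \<odot> b2)"
    using frac_eq[OF M ins(3,4) i2(3,4)] e2 by blast
  have AB: "v1 \<in> A" "v2 \<in> A" "s2 \<in> A" "t2 \<in> A" "u2 \<in> A" using v1 v2 i2 SA by auto
  define m where "m = v1 \<odot> v2 \<odot> s \<odot> t"
  define u where "u = u2 \<odot> v1 \<odot> v2 \<odot> s2 \<odot> t2"
  have mA: "m \<in> A" unfolding m_def using AA AB by simp
  have uS: "u \<in> S" unfolding u_def using v1 v2 i2 msetD(3)[OF M] by simp
  have "(u2 \<odot> (t2 \<odot> a2)) \<odot> m = (v1 \<odot> (s \<odot> a2)) \<odot> (u2 \<odot> t2 \<odot> v2 \<odot> t)"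
    unfolding m_def using AA AB ins i2 by (simp add: mac)
  also have "\<dots> = (v1 \<odot> (s2 \<odot> a)) \<odot> (u2 \<odot> t2 \<odot> v2 \<odot> t)" using v1 by simp
  also have "\<dots> = u \<odot> (t \<odot> a)"
    unfolding u_def using AA AB ins i2 by (simp add: mac)
  finally have eq1: "(u2 \<odot> (t2 \<odot> a2)) \<odot> m = u \<odot> (t \<odot> a)" .
  have "(u2 \<odot> (s2 \<odot> b2)) \<odot> m = (v2 \<odot> (t \<odot> b2)) \<odot> (u2 \<odot> s2 \<odot> v1 \<odot> s)"
    unfolding m_def using AA AB ins i2 by (simp add: mac)
  also have "\<dots> = (v2 \<odot> (t2 \<odot> b)) \<odot> (u2 \<odot> s2 \<odot> v1 \<odot> s)" using v2 by simp
  also have "\<dots> = u \<odot> (s \<odot> b)"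
    unfolding u_def using AA AB ins i2 by (simp add: mac)
  finally have eq2: "(u2 \<odot> (s2 \<odot> b2)) \<odot> m = u \<odot> (s \<odot> b)" .
  show "\<exists>u\<in>S. summ (u \<odot> (t \<odot> a)) (u \<odot> (s \<odot> b))"
    using summ_mul[OF sm mA] eq1 eq2 uS by auto
qed

lemma loc_add: assumes M: "mset S" and ins: "a \<in> A" "s \<in> S" "b \<in> A" "t \<in> S"
  and uS: "u \<in> S" and sm: "summ (u \<odot> (t \<odot> a)) (u \<odot> (s \<odot> b))"
  shows "padd (localization R S) (frac R S a s) (frac R S b t) =
         frac R S (u \<odot> (t \<odot> a) \<oplus> u \<odot> (s \<odot> b)) (u \<odot> (s \<odot> t))"
proof -
  have SA: "S \<subseteq> A" using msetD[OF M] by auto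
  have AA: "s \<in> A" "t \<in> A" "u \<in> A" using ins uS SA by auto
  show ?thesis
    unfolding localization_def pring.simps
  proof (rule someI2, (intro exI conjI; (rule refl)?; fact?), elim exE conjE)
    fix Z a2 s2 b2 t2 u2
    assume e1: "frac R S a s = frac R S a2 s2" and e2: "frac R S b t = frac R S b2 t2"
      and i2: "a2 \<in> A" "s2 \<in> S" "b2 \<in> A" "t2 \<in> S" "u2 \<in> S"
      and sm2: "summ (u2 \<odot> (t2 \<odot> a2)) (u2 \<odot> (s2 \<odot> b2))"
      and Z: "Z = frac R S (u2 \<odot> (t2 \<odot> a2) \<oplus> u2 \<odot> (s2 \<odot> b2)) (u2 \<odot> (s2 \<odot> t2))"
    obtain v1 where v1: "v1 \<in> S" "v1 \<odot> (s2 \<odot> a) = v1 \<odot> (s \<odot> a2)"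
      using frac_eq[OF M ins(1,2) i2(1,2)] e1 by blast
    obtain v2 where v2: "v2 \<in> S" "v2 \<odot> (t2 \<odot> b) = v2 \<odot> (t \<odot> b2)"
      using frac_eq[OF M ins(3,4) i2(3,4)] e2 by blast
    have AB: "v1 \<in> A" "v2 \<in> A" "s2 \<in> A" "t2 \<in> A" "u2 \<in> A" using v1 v2 i2 SA by auto
    define w where "w = v1 \<odot> v2"
    define M1 where "M1 = u \<odot> (s \<odot> t)"
    define N1 where "N1 = u2 \<odot> (s2 \<odot> t2)"
    have wA: "w \<in> A" "M1 \<in> A" "N1 \<in> A" unfolding w_def M1_def N1_def using AA AB by auto
    have x1: "(w \<odot> M1) \<odot> (u2 \<odot> (t2 \<odot> a2)) = (w \<odot> N1) \<odot> (u \<odot> (t \<odot> a))"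
    proof -
      have "(w \<odot> M1) \<odot> (u2 \<odot> (t2 \<odot> a2)) = (v1 \<odot> (s \<odot> a2)) \<odot> (v2 \<odot> u \<odot> t \<odot> u2 \<odot> t2)"
        unfolding w_def M1_def using AA AB ins i2 by (simp add: mac)
      also have "\<dots> = (v1 \<odot> (s2 \<odot> a)) \<odot> (v2 \<odot> u \<odot> t \<odot> u2 \<odot> t2)" using v1 by simp
      also have "\<dots> = (w \<odot> N1) \<odot> (u \<odot> (t \<odot> a))"
        unfolding w_def N1_def using AA AB ins i2 by (simp add: mac)
      finally show ?thesis .
    qed
    have x2: "(w \<odot> M1) \<odot> (u2 \<odot> (s2 \<odot> b2)) = (w \<odot> N1) \<odot> (u \<odot> (s \<odot> b))"
    proof -
      have "(w \<odot> M1) \<odot> (u2 \<odot> (s2 \<odot> b2)) = (v2 \<odot> (t \<odot> b2)) \<odot> (v1 \<odot> u \<odot> s \<odot> u2 \<odot> s2)"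
        unfolding w_def M1_def using AA AB ins i2 by (simp add: mac)
      also have "\<dots> = (v2 \<odot> (t2 \<odot> b)) \<odot> (v1 \<odot> u \<odot> s \<odot> u2 \<odot> s2)" using v2 by simp
      also have "\<dots> = (w \<odot> N1) \<odot> (u \<odot> (s \<odot> b))"
        unfolding w_def N1_def using AA AB ins i2 by (simp add: mac)
      finally show ?thesis .
    qed
    have s1A: "u2 \<odot> (t2 \<odot> a2) \<oplus> u2 \<odot> (s2 \<odot> b2) \<in> A" using summ_in[OF sm2] by auto
    have s2A: "u \<odot> (t \<odot> a) \<oplus> u \<odot> (s \<odot> b) \<in> A" using summ_in[OF sm] by auto
    have "w \<odot> (M1 \<odot> (u2 \<odot> (t2 \<odot> a2) \<oplus> u2 \<odot> (s2 \<odot> b2))) = (w \<odot> M1) \<odot> (u2 \<odot> (t2 \<odot> a2) \<oplus> u2 \<odot> (s2 \<odot> b2))"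
      using wA s1A by (simp add: mul_assoc)
    also have "\<dots> = (w \<odot> M1) \<odot> (u2 \<odot> (t2 \<odot> a2)) \<oplus> (w \<odot> M1) \<odot> (u2 \<odot> (s2 \<odot> b2))"
      using mul_add[OF sm2] wA by simp
    also have "\<dots> = (w \<odot> N1) \<odot> (u \<odot> (t \<odot> a)) \<oplus> (w \<odot> N1) \<odot> (u \<odot> (s \<odot> b))"
      using x1 x2 by simp
    also have "\<dots> = (w \<odot> N1) \<odot> (u \<odot> (t \<odot> a) \<oplus> u \<odot> (s \<odot> b))"
      using mul_add[OF sm] wA by simp
    also have "\<dots> = w \<odot> (N1 \<odot> (u \<odot> (t \<odot> a) \<oplus> u \<odot> (s \<odot> b)))"
      using wA s2A by (simp add: mul_assoc)
    finally have eq: "w \<odot> (M1 \<odot> (u2 \<odot> (t2 \<odot> a2) \<oplus> u2 \<odot> (s2 \<odot> b2))) = w \<odot> (N1 \<odot> (u \<odot> (t \<odot> a) \<oplus> u \<odot> (s \<odot> b)))" .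
    have wS: "w \<in> S" "M1 \<in> S" "N1 \<in> S" unfolding w_def M1_def N1_def
      using v1 v2 i2 ins uS msetD(3)[OF M] by auto
    show "Z = frac R S (u \<odot> (t \<odot> a) \<oplus> u \<odot> (s \<odot> b)) (u \<odot> (s \<odot> t))"
      unfolding Z using frac_eqI[OF M s1A _ s2A _ _ eq] wS unfolding M1_def N1_def by blast
  qed
qed


abbreviation X where "X \<equiv> spec R"
abbreviation D where "D a \<equiv> basic_open R a"
abbreviation T where "T \<equiv> zariski R"
abbreviation SO where "SO U \<equiv> S_open R U"

lemma spec_D: "P \<in> X \<Longrightarrow> pideal R P \<and> P \<noteq> A \<and> (\<forall>a\<in>A. \<forall>b\<in>A. a \<odot> b \<in> P \<longrightarrow> a \<in> P \<or> b \<in> P)"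
  unfolding spec_def pprime_def by simp

lemma prime_sub: "P \<in> X \<Longrightarrow> P \<subseteq> A"
  using spec_D unfolding pideal_def by blast

lemma prime_one: assumes "P \<in> X" shows "one \<notin> P"
proof
  assume o: "one \<in> P"
  have "\<forall>a\<in>A. \<forall>i\<in>P. a \<odot> i \<in> P" using spec_D[OF assms] unfolding pideal_def by blast
  then have "A \<subseteq> P" using o by (metis mul_one subsetI)
  then show False using spec_D[OF assms] prime_sub[OF assms] by blast
qed

lemma prime_mul: assumes "P \<in> X" "a \<in> A" "b \<in> A"
  shows "a \<odot> b \<in> P \<longleftrightarrow> a \<in> P \<or> b \<in> P"
proof
  show "a \<odot> b \<in> P \<Longrightarrow> a \<in> P \<or> b \<in> P" using spec_D[OF assms(1)] assms by blast
  have ab: "\<forall>a\<in>A. \<forall>i\<in>P. a \<odot> i \<in> P" using spec_D[OF assms(1)] unfolding pideal_def by blast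
  assume "a \<in> P \<or> b \<in> P"
  then show "a \<odot> b \<in> P"
  proof
    assume "a \<in> P" then have "b \<odot> a \<in> P" using ab assms by blast
    then show ?thesis using mul_comm assms by simp
  next
    assume "b \<in> P" then show ?thesis using ab assms by blast
  qed
qed

lemma mset_compl: assumes "P \<in> X" shows "mset (A - P)"
  unfolding mset_def using prime_one[OF assms] prime_mul[OF assms] by auto

lemma mset_SO: assumes "U \<subseteq> X" shows "mset (SO U)"
  unfolding mset_def S_open_def using prime_one prime_mul assms by auto

lemma SO_anti: "W \<subseteq> U \<Longrightarrow> SO U \<subseteq> SO W"
  unfolding S_open_def by auto

lemma SO_compl: "q \<in> U \<Longrightarrow> SO U \<subseteq> A - q"
  unfolding S_open_def by auto

lemma SO_iff: "U \<subseteq> X \<Longrightarrow> s \<in> SO U \<longleftrightarrow> s \<in> A \<and> U \<subseteq> D s"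
  unfolding S_open_def basic_open_def by auto

lemma D_mul: "a \<in> A \<Longrightarrow> b \<in> A \<Longrightarrow> D (a \<odot> b) = D a \<inter> D b"
  unfolding basic_open_def using prime_mul by auto

lemma D_one: "D one = X"
  unfolding basic_open_def using prime_one by auto

lemma D_sub: "D a \<subseteq> X"
  unfolding basic_open_def by auto

lemma topT: "topspace T = X"
proof -
  have "topspace T = \<Union> (basic_open R ` A)" unfolding zariski_def by simp
  also have "\<dots> = X" using D_sub D_one one_in by blast
  finally show ?thesis .
qed

lemma open_D: "a \<in> A \<Longrightarrow> openin T (D a)"
  unfolding zariski_def by (rule topology_generated_by_Basis) simp

lemma open_sub: "openin T U \<Longrightarrow> U \<subseteq> X"
  using openin_subset topT by blast


abbreviation Fp where "Fp \<equiv> struct_presheaf R"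
abbreviation rp where "rp \<equiv> struct_presheaf_res R"
abbreviation PS where "PS q \<equiv> stalk T Fp rp q"
abbreviation gp where "gp q U a s \<equiv> germ T Fp rp q U (frac R (SO U) a s)"
abbreviation Lq where "Lq q \<equiv> localization R (A - q)"
abbreviation fq where "fq q a s \<equiv> frac R (A - q) a s"

lemma open_Int3: "openin T U \<Longrightarrow> openin T V \<Longrightarrow> openin T W \<Longrightarrow> openin T (U \<inter> V \<inter> W)"
  by (simp add: openin_Int)

lemma rp_frac: assumes "U \<subseteq> X" "W \<subseteq> U" "a \<in> A" "s \<in> SO U"
  shows "rp U W (frac R (SO U) a s) = frac R (SO W) a s"
  unfolding struct_presheaf_res_def
  using frac_res[OF mset_SO mset_SO SO_anti] assms by auto

lemma Fp_carrier: "c \<in> pcarrier (Fp U) \<longleftrightarrow> (\<exists>a s. c = frac R (SO U) a s \<and> a \<in> A \<and> s \<in> SO U)"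
  unfolding struct_presheaf_def loc_carrier by blast

lemma frac_Fp: "a \<in> A \<Longrightarrow> s \<in> SO U \<Longrightarrow> frac R (SO U) a s \<in> pcarrier (Fp U)"
  using Fp_carrier by blast

lemma rp_func: "openin T U \<Longrightarrow> openin T W1 \<Longrightarrow> openin T W \<Longrightarrow> W \<subseteq> W1 \<Longrightarrow> W1 \<subseteq> U
      \<Longrightarrow> c \<in> pcarrier (Fp U) \<Longrightarrow> rp W1 W (rp U W1 c) = rp U W c"
proof -
  assume h: "openin T U" "openin T W1" "openin T W" "W \<subseteq> W1" "W1 \<subseteq> U" "c \<in> pcarrier (Fp U)"
  then obtain a s where c: "c = frac R (SO U) a s" "a \<in> A" "s \<in> SO U" using Fp_carrier by blast
  have U: "U \<subseteq> X" using open_sub h by blast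
  have s1: "s \<in> SO W1" using SO_anti[OF h(5)] c by blast
  show ?thesis unfolding c(1)
    using rp_frac[OF U h(5) c(2,3)] rp_frac[OF U _ c(2,3), of W] rp_frac[of W1 W a s] h U s1 c by auto
qed

lemma S_in_A: "U \<subseteq> X \<Longrightarrow> s \<in> SO U \<Longrightarrow> s \<in> A"
  unfolding S_open_def by auto

lemma gp_eq: assumes U: "openin T U" "q \<in> U" "a \<in> A" "s \<in> SO U"
  and V: "openin T V" "q \<in> V" "b \<in> A" "t \<in> SO V"
  shows "gp q U a s = gp q V b t \<longleftrightarrow> fq q a s = fq q b t"
proof -
  have q: "q \<in> X" using open_sub U by blast
  have UX: "U \<subseteq> X" "V \<subseteq> X" using open_sub U V by auto
  have Mq: "mset (A - q)" using mset_compl[OF q] .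
  have sq: "s \<in> A - q" "t \<in> A - q" using SO_compl U V by auto
  have "gp q U a s = gp q V b t \<longleftrightarrow>
     (\<exists>W. openin T W \<and> q \<in> W \<and> W \<subseteq> U \<inter> V \<and> rp U W (frac R (SO U) a s) = rp V W (frac R (SO V) b t))"
    by (rule germ_eq_iff[OF rp_func]) (use U V frac_Fp in auto)
  also have "\<dots> \<longleftrightarrow> (\<exists>W. openin T W \<and> q \<in> W \<and> W \<subseteq> U \<inter> V \<and> frac R (SO W) a s = frac R (SO W) b t)"
    using rp_frac UX U V by (metis le_inf_iff)
  also have "\<dots> \<longleftrightarrow> fq q a s = fq q b t"
  proof
    assume "\<exists>W. openin T W \<and> q \<in> W \<and> W \<subseteq> U \<inter> V \<and> frac R (SO W) a s = frac R (SO W) b t"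
    then obtain W where W: "openin T W" "q \<in> W" "W \<subseteq> U \<inter> V" "frac R (SO W) a s = frac R (SO W) b t" by blast
    have WX: "W \<subseteq> X" using open_sub W by blast
    have st: "s \<in> SO W" "t \<in> SO W" using SO_anti W U V by blast+
    show "fq q a s = fq q b t"
      by (rule frac_mono[OF SO_compl[OF W(2)] W(4) mset_SO[OF WX] Mq U(3) st(1) V(3) st(2)])
  next
    assume "fq q a s = fq q b t"
    then obtain u where u: "u \<in> A - q" "u \<odot> (t \<odot> a) = u \<odot> (s \<odot> b)"
      using frac_eq[OF Mq U(3) sq(1) V(3) sq(2)] by blast
    define W where "W = U \<inter> V \<inter> D u"
    have W: "openin T W" "q \<in> W" "W \<subseteq> U \<inter> V" unfolding W_def
      using open_Int3[OF U(1) V(1) open_D] u U V q unfolding basic_open_def by auto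
    have WX: "W \<subseteq> X" using open_sub W by blast
    have st: "s \<in> SO W" "t \<in> SO W" using SO_anti W U V by blast+
    have uW: "u \<in> SO W" using SO_iff[OF WX] u unfolding W_def by auto
    have "frac R (SO W) a s = frac R (SO W) b t"
      by (rule frac_eqI[OF mset_SO[OF WX] U(3) st(1) V(3) st(2) uW u(2)])
    then show "\<exists>W. openin T W \<and> q \<in> W \<and> W \<subseteq> U \<inter> V \<and> frac R (SO W) a s = frac R (SO W) b t"
      using W by blast
  qed
  finally show ?thesis .
qed


lemma ps_mul: assumes U: "openin T U" "q \<in> U" "a \<in> A" "s \<in> SO U"
  and V: "openin T V" "q \<in> V" "b \<in> A" "t \<in> SO V"
  and W: "openin T W" "q \<in> W" "s \<odot> t \<in> SO W"
  shows "pmul (PS q) (gp q U a s) (gp q V b t) = gp q W (a \<odot> b) (s \<odot> t)"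
proof -
  have q: "q \<in> X" using open_sub U by blast
  have Mq: "mset (A - q)" using mset_compl[OF q] .
  have sq: "s \<in> A - q" "t \<in> A - q" using SO_compl U V by auto
  have key: "K = gp q W (a \<odot> b) (s \<odot> t)"
    if h: "gp q U a s = germ T Fp rp q U' c" "gp q V b t = germ T Fp rp q V' d"
       "openin T U'" "q \<in> U'" "c \<in> pcarrier (Fp U')" "openin T V'" "q \<in> V'" "d \<in> pcarrier (Fp V')"
       "K = germ T Fp rp q (U' \<inter> V') (pmul (Fp (U' \<inter> V')) (rp U' (U' \<inter> V') c) (rp V' (U' \<inter> V') d))"
     for K U' c V' d
  proof -
    obtain a2 s2 where c: "c = frac R (SO U') a2 s2" "a2 \<in> A" "s2 \<in> SO U'" using h(5) Fp_carrier by blast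
    obtain b2 t2 where d: "d = frac R (SO V') b2 t2" "b2 \<in> A" "t2 \<in> SO V'" using h(8) Fp_carrier by blast
    define I where "I = U' \<inter> V'"
    have I: "openin T I" "q \<in> I" "I \<subseteq> X" unfolding I_def using h open_sub by auto
    have UX: "U' \<subseteq> X" "V' \<subseteq> X" using open_sub h by auto
    have st2: "s2 \<in> SO I" "t2 \<in> SO I" using SO_anti[of I U'] SO_anti[of I V'] c d unfolding I_def by auto
    have "pmul (Fp I) (rp U' I c) (rp V' I d) = pmul (localization R (SO I)) (frac R (SO I) a2 s2) (frac R (SO I) b2 t2)"
      unfolding c d struct_presheaf_def using rp_frac UX c d unfolding I_def by auto
    also have "\<dots> = frac R (SO I) (a2 \<odot> b2) (s2 \<odot> t2)"
      using loc_mul[OF mset_SO[OF I(3)] c(2) st2(1) d(2) st2(2)] .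
    finally have K: "K = gp q I (a2 \<odot> b2) (s2 \<odot> t2)" using h(9) unfolding I_def by simp
    have e1: "fq q a s = fq q a2 s2" using h(1) gp_eq[OF U h(3,4) c(2,3)] c by simp
    have e2: "fq q b t = fq q b2 t2" using h(2) gp_eq[OF V h(6,7) d(2,3)] d by simp
    have sq2: "s2 \<in> A - q" "t2 \<in> A - q" using SO_compl h c d by blast+
    have "fq q (a2 \<odot> b2) (s2 \<odot> t2) = pmul (Lq q) (fq q a2 s2) (fq q b2 t2)"
      using loc_mul[OF Mq c(2) sq2(1) d(2) sq2(2)] by simp
    also have "\<dots> = pmul (Lq q) (fq q a s) (fq q b t)" using e1 e2 by simp
    also have "\<dots> = fq q (a \<odot> b) (s \<odot> t)" using loc_mul[OF Mq U(3) sq(1) V(3) sq(2)] .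
    finally have "fq q (a2 \<odot> b2) (s2 \<odot> t2) = fq q (a \<odot> b) (s \<odot> t)" .
    moreover have "s2 \<odot> t2 \<in> SO I" using msetD(3)[OF mset_SO[OF I(3)]] st2 by blast
    moreover have "a2 \<odot> b2 \<in> A" "a \<odot> b \<in> A" using c d U V by auto
    ultimately show ?thesis unfolding K using gp_eq[OF I(1,2) _ _ W(1,2) _ W(3)] by blast
  qed
  have ex: "\<exists>U' c V' d. gp q U a s = germ T Fp rp q U' c \<and> gp q V b t = germ T Fp rp q V' d
        \<and> openin T U' \<and> q \<in> U' \<and> c \<in> pcarrier (Fp U') \<and> openin T V' \<and> q \<in> V' \<and> d \<in> pcarrier (Fp V')
        \<and> K0 = germ T Fp rp q (U' \<inter> V') (pmul (Fp (U' \<inter> V')) (rp U' (U' \<inter> V') c) (rp V' (U' \<inter> V') d))"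
    if "K0 = germ T Fp rp q (U \<inter> V) (pmul (Fp (U \<inter> V)) (rp U (U \<inter> V) (frac R (SO U) a s)) (rp V (U \<inter> V) (frac R (SO V) b t)))"
    for K0
    using that U V frac_Fp by blast
  show ?thesis
    unfolding stalk_def pring.simps
    apply (rule some_eqI)
    apply (rule exI, rule ex[OF refl])
    apply (elim exE conjE)
    apply (rule key)
    apply assumption+
    done
qed

lemma ps_summ: assumes U: "openin T U" "q \<in> U" "a \<in> A" "s \<in> SO U"
  and V: "openin T V" "q \<in> V" "b \<in> A" "t \<in> SO V"
  shows "psummable (PS q) (gp q U a s) (gp q V b t) \<longleftrightarrow> (\<exists>u\<in>A - q. summ (u \<odot> (t \<odot> a)) (u \<odot> (s \<odot> b)))"
proof -
  have q: "q \<in> X" using open_sub U by blast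
  have Mq: "mset (A - q)" using mset_compl[OF q] .
  have sq: "s \<in> A - q" "t \<in> A - q" using SO_compl U V by auto
  have UX0: "U \<subseteq> X" "V \<subseteq> X" using open_sub U V by auto
  show ?thesis
  proof
    assume "psummable (PS q) (gp q U a s) (gp q V b t)"
    then obtain U' c V' d W where h: "gp q U a s = germ T Fp rp q U' c" "gp q V b t = germ T Fp rp q V' d"
       "openin T U'" "q \<in> U'" "c \<in> pcarrier (Fp U')" "openin T V'" "q \<in> V'" "d \<in> pcarrier (Fp V')"
       "openin T W" "q \<in> W" "W \<subseteq> U' \<inter> V'" "psummable (Fp W) (rp U' W c) (rp V' W d)"
      unfolding stalk_def pring.simps by blast
    obtain a2 s2 where c: "c = frac R (SO U') a2 s2" "a2 \<in> A" "s2 \<in> SO U'" using h(5) Fp_carrier by blast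
    obtain b2 t2 where d: "d = frac R (SO V') b2 t2" "b2 \<in> A" "t2 \<in> SO V'" using h(8) Fp_carrier by blast
    have WX: "W \<subseteq> X" using open_sub h by auto
    have UX: "U' \<subseteq> X" "V' \<subseteq> X" using open_sub h by auto
    have st2: "s2 \<in> SO W" "t2 \<in> SO W" using SO_anti[of W U'] SO_anti[of W V'] c d h(11) by auto
    have "psummable (localization R (SO W)) (frac R (SO W) a2 s2) (frac R (SO W) b2 t2)"
      using h(12) unfolding c d struct_presheaf_def using rp_frac UX c d h(11) by auto
    then obtain u where u: "u \<in> SO W" "summ (u \<odot> (t2 \<odot> a2)) (u \<odot> (s2 \<odot> b2))"
      using loc_summ[OF mset_SO[OF WX] c(2) st2(1) d(2) st2(2)] by blast
    have sq2: "s2 \<in> A - q" "t2 \<in> A - q" using SO_compl h c d by blast+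
    have "psummable (Lq q) (fq q a2 s2) (fq q b2 t2)"
      using loc_summ[OF Mq c(2) sq2(1) d(2) sq2(2)] u SO_compl[OF h(10)] by blast
    moreover have e1: "fq q a s = fq q a2 s2" using h(1) gp_eq[OF U h(3,4) c(2,3)] c by simp
    moreover have e2: "fq q b t = fq q b2 t2" using h(2) gp_eq[OF V h(6,7) d(2,3)] d by simp
    ultimately have "psummable (Lq q) (fq q a s) (fq q b t)" by simp
    then show "\<exists>u\<in>A - q. summ (u \<odot> (t \<odot> a)) (u \<odot> (s \<odot> b))"
      using loc_summ[OF Mq U(3) sq(1) V(3) sq(2)] by blast
  next
    assume "\<exists>u\<in>A - q. summ (u \<odot> (t \<odot> a)) (u \<odot> (s \<odot> b))"
    then obtain u where u: "u \<in> A - q" "summ (u \<odot> (t \<odot> a)) (u \<odot> (s \<odot> b))" by blast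
    define W where "W = U \<inter> V \<inter> D u"
    have W: "openin T W" "q \<in> W" "W \<subseteq> U \<inter> V" unfolding W_def
      using open_Int3[OF U(1) V(1) open_D] u U V q unfolding basic_open_def by auto
    have WX: "W \<subseteq> X" using open_sub W by blast
    have st: "s \<in> SO W" "t \<in> SO W" using SO_anti W U V by blast+
    have uW: "u \<in> SO W" using SO_iff[OF WX] u unfolding W_def by auto
    have "psummable (localization R (SO W)) (frac R (SO W) a s) (frac R (SO W) b t)"
      using loc_summ[OF mset_SO[OF WX] U(3) st(1) V(3) st(2)] uW u by blast
    then have "psummable (Fp W) (rp U W (frac R (SO U) a s)) (rp V W (frac R (SO V) b t))"
      unfolding struct_presheaf_def using rp_frac UX0 U V W by auto
    then show "psummable (PS q) (gp q U a s) (gp q V b t)"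
      unfolding stalk_def pring.simps using U V W frac_Fp by blast
  qed
qed

lemma ps_add: assumes U: "openin T U" "q \<in> U" "a \<in> A" "s \<in> SO U"
  and V: "openin T V" "q \<in> V" "b \<in> A" "t \<in> SO V"
  and u: "u \<in> A - q" "summ (u \<odot> (t \<odot> a)) (u \<odot> (s \<odot> b))"
  and W: "openin T W" "q \<in> W" "u \<odot> (s \<odot> t) \<in> SO W"
  shows "padd (PS q) (gp q U a s) (gp q V b t) = gp q W (u \<odot> (t \<odot> a) \<oplus> u \<odot> (s \<odot> b)) (u \<odot> (s \<odot> t))"
proof -
  have q: "q \<in> X" using open_sub U by blast
  have Mq: "mset (A - q)" using mset_compl[OF q] .
  have sq: "s \<in> A - q" "t \<in> A - q" using SO_compl U V by auto
  have UX0: "U \<subseteq> X" "V \<subseteq> X" using open_sub U V by auto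
  have key: "K = gp q W (u \<odot> (t \<odot> a) \<oplus> u \<odot> (s \<odot> b)) (u \<odot> (s \<odot> t))"
    if h: "gp q U a s = germ T Fp rp q U' c" "gp q V b t = germ T Fp rp q V' d"
       "openin T U'" "q \<in> U'" "c \<in> pcarrier (Fp U')" "openin T V'" "q \<in> V'" "d \<in> pcarrier (Fp V')"
       "openin T W'" "q \<in> W'" "W' \<subseteq> U' \<inter> V'" "psummable (Fp W') (rp U' W' c) (rp V' W' d)"
       "K = germ T Fp rp q W' (padd (Fp W') (rp U' W' c) (rp V' W' d))"
     for K U' c V' d W'
  proof -
    obtain a2 s2 where c: "c = frac R (SO U') a2 s2" "a2 \<in> A" "s2 \<in> SO U'" using h(5) Fp_carrier by blast
    obtain b2 t2 where d: "d = frac R (SO V') b2 t2" "b2 \<in> A" "t2 \<in> SO V'" using h(8) Fp_carrier by blast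
    have WX: "W' \<subseteq> X" using open_sub h by auto
    have UX: "U' \<subseteq> X" "V' \<subseteq> X" using open_sub h by auto
    have MW: "mset (SO W')" using mset_SO[OF WX] .
    have st2: "s2 \<in> SO W'" "t2 \<in> SO W'" using SO_anti[of W' U'] SO_anti[of W' V'] c d h(11) by auto
    have rc: "rp U' W' c = frac R (SO W') a2 s2" "rp V' W' d = frac R (SO W') b2 t2"
      unfolding c d using rp_frac UX c d h(11) by auto
    have "psummable (localization R (SO W')) (frac R (SO W') a2 s2) (frac R (SO W') b2 t2)"
      using h(12) unfolding rc struct_presheaf_def .
    then obtain u2 where u2: "u2 \<in> SO W'" "summ (u2 \<odot> (t2 \<odot> a2)) (u2 \<odot> (s2 \<odot> b2))"
      using loc_summ[OF MW c(2) st2(1) d(2) st2(2)] by blast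
    have K: "K = gp q W' (u2 \<odot> (t2 \<odot> a2) \<oplus> u2 \<odot> (s2 \<odot> b2)) (u2 \<odot> (s2 \<odot> t2))"
      using h(13) unfolding rc struct_presheaf_def using loc_add[OF MW c(2) st2(1) d(2) st2(2) u2] by simp
    have sq2: "s2 \<in> A - q" "t2 \<in> A - q" using SO_compl h c d by blast+
    have u2q: "u2 \<in> A - q" using u2 SO_compl[OF h(10)] by blast
    have e1: "fq q a s = fq q a2 s2" using h(1) gp_eq[OF U h(3,4) c(2,3)] c by simp
    have e2: "fq q b t = fq q b2 t2" using h(2) gp_eq[OF V h(6,7) d(2,3)] d by simp
    have "fq q (u2 \<odot> (t2 \<odot> a2) \<oplus> u2 \<odot> (s2 \<odot> b2)) (u2 \<odot> (s2 \<odot> t2)) = padd (Lq q) (fq q a2 s2) (fq q b2 t2)"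
      using loc_add[OF Mq c(2) sq2(1) d(2) sq2(2) u2q u2(2)] by simp
    also have "\<dots> = padd (Lq q) (fq q a s) (fq q b t)" using e1 e2 by simp
    also have "\<dots> = fq q (u \<odot> (t \<odot> a) \<oplus> u \<odot> (s \<odot> b)) (u \<odot> (s \<odot> t))"
      using loc_add[OF Mq U(3) sq(1) V(3) sq(2) u] .
    finally have eq: "fq q (u2 \<odot> (t2 \<odot> a2) \<oplus> u2 \<odot> (s2 \<odot> b2)) (u2 \<odot> (s2 \<odot> t2)) = fq q (u \<odot> (t \<odot> a) \<oplus> u \<odot> (s \<odot> b)) (u \<odot> (s \<odot> t))" .
    have m1: "u2 \<odot> (s2 \<odot> t2) \<in> SO W'" using msetD(3)[OF MW] st2 u2 by blast
    have a1: "u2 \<odot> (t2 \<odot> a2) \<oplus> u2 \<odot> (s2 \<odot> b2) \<in> A" using summ_in[OF u2(2)] by blast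
    have a2: "u \<odot> (t \<odot> a) \<oplus> u \<odot> (s \<odot> b) \<in> A" using summ_in[OF u(2)] by blast
    show ?thesis unfolding K using gp_eq[OF h(9,10) a1 m1 W(1,2) a2 W(3)] eq by blast
  qed
  define W0 where "W0 = U \<inter> V \<inter> D u"
  have W0: "openin T W0" "q \<in> W0" "W0 \<subseteq> U \<inter> V" unfolding W0_def
    using open_Int3[OF U(1) V(1) open_D] u U V q unfolding basic_open_def by auto
  have WX: "W0 \<subseteq> X" using open_sub W0 by blast
  have st: "s \<in> SO W0" "t \<in> SO W0" using SO_anti W0 U V by blast+
  have uW: "u \<in> SO W0" using SO_iff[OF WX] u unfolding W0_def by auto
  have "psummable (localization R (SO W0)) (frac R (SO W0) a s) (frac R (SO W0) b t)"
    using loc_summ[OF mset_SO[OF WX] U(3) st(1) V(3) st(2)] uW u by blast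
  then have sm: "psummable (Fp W0) (rp U W0 (frac R (SO U) a s)) (rp V W0 (frac R (SO V) b t))"
    unfolding struct_presheaf_def using rp_frac UX0 U V W0 by auto
  have ex: "\<exists>U' c V' d W'. gp q U a s = germ T Fp rp q U' c \<and> gp q V b t = germ T Fp rp q V' d
        \<and> openin T U' \<and> q \<in> U' \<and> c \<in> pcarrier (Fp U') \<and> openin T V' \<and> q \<in> V' \<and> d \<in> pcarrier (Fp V')
        \<and> openin T W' \<and> q \<in> W' \<and> W' \<subseteq> U' \<inter> V'
        \<and> psummable (Fp W') (rp U' W' c) (rp V' W' d)
        \<and> K0 = germ T Fp rp q W' (padd (Fp W') (rp U' W' c) (rp V' W' d))"
    if "K0 = germ T Fp rp q W0 (padd (Fp W0) (rp U W0 (frac R (SO U) a s)) (rp V W0 (frac R (SO V) b t)))"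
    for K0
    using that U V W0 sm frac_Fp by blast
  show ?thesis
    unfolding stalk_def pring.simps
    apply (rule some_eqI)
    apply (rule exI, rule ex[OF refl])
    apply (elim exE conjE)
    apply (rule key[rotated 12])
    apply assumption+
    done
qed


abbreviation Fs where "Fs \<equiv> struct_sheaf R"
abbreviation gs where "gs P U \<sigma> \<equiv> germ T Fs sheafify_res P U \<sigma>"
abbreviation SS where "SS P \<equiv> struct_stalk R P"

lemma Fs_carrier: "\<sigma> \<in> pcarrier (Fs U) \<longleftrightarrow> (\<forall>q. q \<notin> U \<longrightarrow> \<sigma> q = {})
        \<and> (\<forall>q\<in>U. \<exists>V c. openin T V \<and> q \<in> V \<and> V \<subseteq> U \<and> c \<in> pcarrier (Fp V)
               \<and> (\<forall>r\<in>V. \<sigma> r = germ T Fp rp r V c))"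
  unfolding struct_sheaf_def sheafify_def pring.simps mem_Collect_eq by (rule refl)

lemma Fs_mul: "pmul (Fs U) \<sigma> \<tau> = (\<lambda>q. if q \<in> U then pmul (PS q) (\<sigma> q) (\<tau> q) else {})"
  unfolding struct_sheaf_def sheafify_def pring.simps by (rule refl)
lemma Fs_add: "padd (Fs U) \<sigma> \<tau> = (\<lambda>q. if q \<in> U then padd (PS q) (\<sigma> q) (\<tau> q) else {})"
  unfolding struct_sheaf_def sheafify_def pring.simps by (rule refl)
lemma Fs_summ: "psummable (Fs U) \<sigma> \<tau> \<longleftrightarrow> (\<forall>q\<in>U. psummable (PS q) (\<sigma> q) (\<tau> q))"
  unfolding struct_sheaf_def sheafify_def pring.simps by (rule refl)
lemma Fs_zero: "pzero (Fs U) = (\<lambda>q. if q \<in> U then pzero (PS q) else {})"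
  unfolding struct_sheaf_def sheafify_def pring.simps by (rule refl)
lemma Fs_one: "pone (Fs U) = (\<lambda>q. if q \<in> U then pone (PS q) else {})"
  unfolding struct_sheaf_def sheafify_def pring.simps by (rule refl)
lemmas Fs_ops = Fs_mul Fs_add Fs_summ Fs_zero Fs_one

lemma Fs_carrierD1: assumes "\<sigma> \<in> pcarrier (Fs U)"
  shows "\<forall>q. q \<notin> U \<longrightarrow> \<sigma> q = {}"
  using assms unfolding Fs_carrier by (rule conjunct1)

lemma Fs_carrierD2: assumes "\<sigma> \<in> pcarrier (Fs U)"
  shows "\<forall>q\<in>U. \<exists>V c. openin T V \<and> q \<in> V \<and> V \<subseteq> U \<and> c \<in> pcarrier (Fp V)
               \<and> (\<forall>r\<in>V. \<sigma> r = germ T Fp rp r V c)"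
  using assms unfolding Fs_carrier by (rule conjunct2)

lemmas Fs_carrierD = Fs_carrierD1 Fs_carrierD2

lemma Fs_local: assumes "\<sigma> \<in> pcarrier (Fs U)" "q \<in> U"
  shows "\<exists>V a s. openin T V \<and> q \<in> V \<and> V \<subseteq> U \<and> a \<in> A \<and> s \<in> SO V \<and> (\<forall>r\<in>V. \<sigma> r = gp r V a s)"
proof -
  obtain V c where h: "openin T V" "q \<in> V" "V \<subseteq> U" "c \<in> pcarrier (Fp V)" "\<forall>r\<in>V. \<sigma> r = germ T Fp rp r V c"
    using Fs_carrierD(2)[OF assms(1)] assms(2) by meson
  obtain a s where c: "c = frac R (SO V) a s" "a \<in> A" "s \<in> SO V" using h(4) unfolding Fp_carrier by blast
  show ?thesis
    apply (rule exI[of _ V], rule exI[of _ a], rule exI[of _ s])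
    using h c by simp
qed

lemma Fs_outside: "\<sigma> \<in> pcarrier (Fs U) \<Longrightarrow> q \<notin> U \<Longrightarrow> \<sigma> q = {}"
  using Fs_carrierD(1) by blast

lemma sr_func: "W \<subseteq> W1 \<Longrightarrow> sheafify_res W1 W (sheafify_res U W1 \<sigma>) = sheafify_res U W \<sigma>"
  unfolding sheafify_res_def by (intro ext) auto

lemma gs_eq: assumes U: "openin T U" "P \<in> U" "\<sigma> \<in> pcarrier (Fs U)"
  and V: "openin T V" "P \<in> V" "\<tau> \<in> pcarrier (Fs V)"
  shows "gs P U \<sigma> = gs P V \<tau> \<longleftrightarrow> (\<exists>W. openin T W \<and> P \<in> W \<and> W \<subseteq> U \<inter> V \<and> (\<forall>q\<in>W. \<sigma> q = \<tau> q))"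
proof -
  have "gs P U \<sigma> = gs P V \<tau> \<longleftrightarrow> (\<exists>W. openin T W \<and> P \<in> W \<and> W \<subseteq> U \<inter> V \<and> sheafify_res U W \<sigma> = sheafify_res V W \<tau>)"
    by (rule germ_eq_iff) (use U V sr_func in auto)
  also have "\<dots> \<longleftrightarrow> (\<exists>W. openin T W \<and> P \<in> W \<and> W \<subseteq> U \<inter> V \<and> (\<forall>q\<in>W. \<sigma> q = \<tau> q))"
    unfolding sheafify_res_def fun_eq_iff by (intro ex_cong1) auto
  finally show ?thesis .
qed

lemma gp_restrict: assumes "openin T W" "q \<in> W" "W \<subseteq> V" "openin T V" "a \<in> A" "s \<in> SO V"
  shows "gp q V a s = gp q W a s"
proof -
  have "s \<in> SO W" using SO_anti assms by blast
  then show ?thesis using gp_eq[of V q a s W a s] assms by blast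
qed

lemma C_mul: assumes U: "openin T U" "\<sigma> \<in> pcarrier (Fs U)" and V: "openin T V" "\<tau> \<in> pcarrier (Fs V)"
  shows "pmul (Fs (U \<inter> V)) (sheafify_res U (U \<inter> V) \<sigma>) (sheafify_res V (U \<inter> V) \<tau>) \<in> pcarrier (Fs (U \<inter> V))"
  unfolding Fs_carrier Fs_ops
apply (intro conjI allI impI ballI)
   apply (rule if_not_P, assumption)
  subgoal premises prems for q
  proof -
  have q: "q \<in> U \<inter> V" using prems .
  have qU: "q \<in> U" and qV: "q \<in> V" using q by auto
  obtain V1 a s where v1: "openin T V1" "q \<in> V1" "V1 \<subseteq> U" "a \<in> A" "s \<in> SO V1" "\<forall>r\<in>V1. \<sigma> r = gp r V1 a s"
    using Fs_local[OF U(2) qU] by (elim exE conjE) (rule that; assumption)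
  obtain V2 b t where v2: "openin T V2" "q \<in> V2" "V2 \<subseteq> V" "b \<in> A" "t \<in> SO V2" "\<forall>r\<in>V2. \<tau> r = gp r V2 b t"
    using Fs_local[OF V(2) qV] by (elim exE conjE) (rule that; assumption)
  define V' where "V' = V1 \<inter> V2"
  have V'o: "openin T V'" unfolding V'_def using openin_Int[OF v1(1) v2(1)] .
  have V': "openin T V'" "q \<in> V'" "V' \<subseteq> U \<inter> V" "V' \<subseteq> X"
    using V'o open_sub[OF V'o] v1(2,3) v2(2,3) unfolding V'_def by blast+
  have s1: "s \<in> SO V'" using SO_anti[of V' V1] v1(5) unfolding V'_def by blast
  have t1: "t \<in> SO V'" using SO_anti[of V' V2] v2(5) unfolding V'_def by blast
  have st: "s \<odot> t \<in> SO V'" using msetD(3)[OF mset_SO[OF V'(4)] s1 t1] .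
  have "\<forall>r\<in>V'. (if r \<in> U \<inter> V then pmul (PS r) (sheafify_res U (U \<inter> V) \<sigma> r) (sheafify_res V (U \<inter> V) \<tau> r) else {})
           = gp r V' (a \<odot> b) (s \<odot> t)"
  proof
    fix r assume r: "r \<in> V'"
    then have "r \<in> U \<inter> V" "r \<in> V1" "r \<in> V2" using V' unfolding V'_def by auto
    then show "(if r \<in> U \<inter> V then pmul (PS r) (sheafify_res U (U \<inter> V) \<sigma> r) (sheafify_res V (U \<inter> V) \<tau> r) else {})
           = gp r V' (a \<odot> b) (s \<odot> t)"
      using ps_mul[OF v1(1) \<open>r \<in> V1\<close> v1(4,5) v2(1) \<open>r \<in> V2\<close> v2(4,5) V'(1) r st] v1(6) v2(6)
      unfolding sheafify_res_def by simp
  qed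
  moreover have "frac R (SO V') (a \<odot> b) (s \<odot> t) \<in> pcarrier (Fp V')"
    using frac_Fp v1 v2 st by simp
  ultimately show "\<exists>Z c. openin T Z \<and> q \<in> Z \<and> Z \<subseteq> U \<inter> V \<and> c \<in> pcarrier (Fp Z) \<and>
       (\<forall>r\<in>Z. (if r \<in> U \<inter> V then pmul (PS r) (sheafify_res U (U \<inter> V) \<sigma> r) (sheafify_res V (U \<inter> V) \<tau> r) else {}) =
               germ T Fp rp r Z c)"
    apply -
    apply (rule exI[of _ V'], rule exI[of _ "frac R (SO V') (a \<odot> b) (s \<odot> t)"])
    using V' by blast
qed
  done

lemma C_add: assumes U: "openin T U" "\<sigma> \<in> pcarrier (Fs U)" and V: "openin T V" "\<tau> \<in> pcarrier (Fs V)"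
  and W: "openin T W" "W \<subseteq> U \<inter> V" and sm: "\<forall>q\<in>W. psummable (PS q) (\<sigma> q) (\<tau> q)"
  shows "padd (Fs W) (sheafify_res U W \<sigma>) (sheafify_res V W \<tau>) \<in> pcarrier (Fs W)"
  unfolding Fs_carrier Fs_ops
apply (intro conjI allI impI ballI)
   apply (rule if_not_P, assumption)
  subgoal premises prems for q
  proof -
  have q: "q \<in> W" using prems .
  have qU: "q \<in> U" and qV: "q \<in> V" using q W by auto
  obtain V1 a s where v1: "openin T V1" "q \<in> V1" "V1 \<subseteq> U" "a \<in> A" "s \<in> SO V1" "\<forall>r\<in>V1. \<sigma> r = gp r V1 a s"
    using Fs_local[OF U(2) qU] by (elim exE conjE) (rule that; assumption)
  obtain V2 b t where v2: "openin T V2" "q \<in> V2" "V2 \<subseteq> V" "b \<in> A" "t \<in> SO V2" "\<forall>r\<in>V2. \<tau> r = gp r V2 b t"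
    using Fs_local[OF V(2) qV] by (elim exE conjE) (rule that; assumption)
  have "psummable (PS q) (\<sigma> q) (\<tau> q)" using sm q by blast
  moreover have "\<sigma> q = gp q V1 a s" using v1(2,6) by blast
  moreover have "\<tau> q = gp q V2 b t" using v2(2,6) by blast
  ultimately have "psummable (PS q) (gp q V1 a s) (gp q V2 b t)" by simp
  then obtain u where u: "u \<in> A - q" "summ (u \<odot> (t \<odot> a)) (u \<odot> (s \<odot> b))"
    using ps_summ[OF v1(1,2,4,5) v2(1,2,4,5)] by blast
  define V' where "V' = V1 \<inter> V2 \<inter> W \<inter> D u"
  have qX: "q \<in> X" using open_sub W q by blast
  have uA: "u \<in> A" using u by blast
  have V'o: "openin T V'" unfolding V'_def using openin_Int[OF openin_Int[OF openin_Int[OF v1(1) v2(1)] W(1)] open_D[OF uA]] .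
  have qD: "q \<in> D u" using u qX unfolding basic_open_def by blast
  have V': "openin T V'" "q \<in> V'" "V' \<subseteq> W" "V' \<subseteq> X"
    using V'o open_sub[OF V'o] v1(2) v2(2) q qD unfolding V'_def by blast+
  have uV: "u \<in> SO V'" using SO_iff[OF V'(4)] uA unfolding V'_def by blast
  have s1: "s \<in> SO V'" using SO_anti[of V' V1] v1(5) unfolding V'_def by blast
  have t1: "t \<in> SO V'" using SO_anti[of V' V2] v2(5) unfolding V'_def by blast
  have st: "u \<odot> (s \<odot> t) \<in> SO V'"
    using msetD(3)[OF mset_SO[OF V'(4)] uV msetD(3)[OF mset_SO[OF V'(4)] s1 t1]] .
  have "\<forall>r\<in>V'. (if r \<in> W then padd (PS r) (sheafify_res U W \<sigma> r) (sheafify_res V W \<tau> r) else {})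
           = gp r V' (u \<odot> (t \<odot> a) \<oplus> u \<odot> (s \<odot> b)) (u \<odot> (s \<odot> t))"
  proof
    fix r assume r: "r \<in> V'"
    then have rr: "r \<in> W" "r \<in> V1" "r \<in> V2" "u \<in> A - r" using uA unfolding V'_def basic_open_def by blast+
    then show "(if r \<in> W then padd (PS r) (sheafify_res U W \<sigma> r) (sheafify_res V W \<tau> r) else {})
           = gp r V' (u \<odot> (t \<odot> a) \<oplus> u \<odot> (s \<odot> b)) (u \<odot> (s \<odot> t))"
      using ps_add[OF v1(1) rr(2) v1(4,5) v2(1) rr(3) v2(4,5) rr(4) u(2) V'(1) r st] v1(6) v2(6)
      unfolding sheafify_res_def by simp
  qed
  moreover have "frac R (SO V') (u \<odot> (t \<odot> a) \<oplus> u \<odot> (s \<odot> b)) (u \<odot> (s \<odot> t)) \<in> pcarrier (Fp V')"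
    using frac_Fp summ_in[OF u(2)] st by simp
  ultimately show "\<exists>Z c. openin T Z \<and> q \<in> Z \<and> Z \<subseteq> W \<and> c \<in> pcarrier (Fp Z) \<and>
       (\<forall>r\<in>Z. (if r \<in> W then padd (PS r) (sheafify_res U W \<sigma> r) (sheafify_res V W \<tau> r) else {}) =
               germ T Fp rp r Z c)"
    apply -
    apply (rule exI[of _ V'], rule exI[of _ "frac R (SO V') (u \<odot> (t \<odot> a) \<oplus> u \<odot> (s \<odot> b)) (u \<odot> (s \<odot> t))"])
    using V' by blast
qed
  done

definition sec where "sec a s = (\<lambda>q. if q \<in> D s then gp q (D s) a s else {})"
definition Phi where "Phi P a s = gs P (D s) (sec a s)"

lemma sec_in: assumes "a \<in> A" "s \<in> A" shows "sec a s \<in> pcarrier (Fs (D s))"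
  unfolding Fs_carrier
proof (intro conjI allI impI ballI)
  fix q assume q: "q \<in> D s"
  have "s \<in> SO (D s)" using SO_iff[OF D_sub] assms by simp
  then show "\<exists>V c. openin T V \<and> q \<in> V \<and> V \<subseteq> D s \<and> c \<in> pcarrier (Fp V) \<and> (\<forall>r\<in>V. sec a s r = germ T Fp rp r V c)"
    using open_D[OF assms(2)] q frac_Fp[OF assms(1)] unfolding sec_def by auto
qed (simp add: sec_def)


lemma SS_carrier: "pcarrier (SS P) = {gs P U \<sigma> | U \<sigma>. openin T U \<and> P \<in> U \<and> \<sigma> \<in> pcarrier (Fs U)}"
  unfolding struct_stalk_def stalk_def pring.simps by (rule refl)

lemma SS_mul: "pmul (SS P) G H = (SOME K. \<exists>U \<sigma> V \<tau>. G = gs P U \<sigma> \<and> H = gs P V \<tau>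
        \<and> openin T U \<and> P \<in> U \<and> \<sigma> \<in> pcarrier (Fs U) \<and> openin T V \<and> P \<in> V \<and> \<tau> \<in> pcarrier (Fs V)
        \<and> K = gs P (U \<inter> V) (pmul (Fs (U \<inter> V)) (sheafify_res U (U \<inter> V) \<sigma>) (sheafify_res V (U \<inter> V) \<tau>)))"
  unfolding struct_stalk_def stalk_def pring.simps by (rule refl)

lemma SS_summ: "psummable (SS P) G H \<longleftrightarrow> (\<exists>U \<sigma> V \<tau> W. G = gs P U \<sigma> \<and> H = gs P V \<tau>
        \<and> openin T U \<and> P \<in> U \<and> \<sigma> \<in> pcarrier (Fs U) \<and> openin T V \<and> P \<in> V \<and> \<tau> \<in> pcarrier (Fs V)
        \<and> openin T W \<and> P \<in> W \<and> W \<subseteq> U \<inter> V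
        \<and> psummable (Fs W) (sheafify_res U W \<sigma>) (sheafify_res V W \<tau>))"
  unfolding struct_stalk_def stalk_def pring.simps by (rule refl)

lemma SS_add: "padd (SS P) G H = (SOME K. \<exists>U \<sigma> V \<tau> W. G = gs P U \<sigma> \<and> H = gs P V \<tau>
        \<and> openin T U \<and> P \<in> U \<and> \<sigma> \<in> pcarrier (Fs U) \<and> openin T V \<and> P \<in> V \<and> \<tau> \<in> pcarrier (Fs V)
        \<and> openin T W \<and> P \<in> W \<and> W \<subseteq> U \<inter> V
        \<and> psummable (Fs W) (sheafify_res U W \<sigma>) (sheafify_res V W \<tau>)
        \<and> K = gs P W (padd (Fs W) (sheafify_res U W \<sigma>) (sheafify_res V W \<tau>)))"
  unfolding struct_stalk_def stalk_def pring.simps by (rule refl)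

lemma top_D1: "topspace T = D one"
  using topT D_one by simp

lemma SS_zero: "pzero (SS P) = gs P (D one) (pzero (Fs (D one)))"
  unfolding struct_stalk_def stalk_def pring.simps top_D1 by (rule refl)

lemma SS_one: "pone (SS P) = gs P (D one) (pone (Fs (D one)))"
  unfolding struct_stalk_def stalk_def pring.simps top_D1 by (rule refl)

lemma PS_zero: "pzero (PS q) = gp q (D one) zero one"
  unfolding stalk_def pring.simps top_D1 struct_presheaf_def loc_zero by (rule refl)

lemma PS_one: "pone (PS q) = gp q (D one) one one"
  unfolding stalk_def pring.simps top_D1 struct_presheaf_def loc_one by (rule refl)

lemma phi_zero: "pzero (SS P) = Phi P zero one"
  unfolding SS_zero Fs_zero PS_zero Phi_def sec_def by (rule refl)

lemma phi_one: "pone (SS P) = Phi P one one"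
  unfolding SS_one Fs_one PS_one Phi_def sec_def by (rule refl)

lemma in_D: "P \<in> X \<Longrightarrow> s \<in> A - P \<Longrightarrow> P \<in> D s"
  unfolding basic_open_def by blast

lemma s_SO_D: "s \<in> A \<Longrightarrow> s \<in> SO (D s)"
  using SO_iff[OF D_sub] by blast

lemma sec_at: "q \<in> D s \<Longrightarrow> sec a s q = gp q (D s) a s"
  unfolding sec_def by simp

lemma phi_in: assumes "P \<in> X" "a \<in> A" "s \<in> A - P" shows "Phi P a s \<in> pcarrier (SS P)"
proof -
  have "openin T (D s)" "P \<in> D s" "sec a s \<in> pcarrier (Fs (D s))"
    using open_D in_D sec_in assms by auto
  then show ?thesis unfolding SS_carrier Phi_def by blast
qed

lemma phi_eq: assumes PX: "P \<in> X" and ab: "a \<in> A" "b \<in> A" and st: "s \<in> A - P" "t \<in> A - P"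
  shows "Phi P a s = Phi P b t \<longleftrightarrow> fq P a s = fq P b t"
proof -
  have sA: "s \<in> A" "t \<in> A" using st by auto
  have o: "openin T (D s)" "openin T (D t)" using open_D sA by auto
  have PD: "P \<in> D s" "P \<in> D t" using in_D PX st by auto
  have sc: "sec a s \<in> pcarrier (Fs (D s))" "sec b t \<in> pcarrier (Fs (D t))" using sec_in ab sA by auto
  have SD: "s \<in> SO (D s)" "t \<in> SO (D t)" using s_SO_D sA by auto
  have "Phi P a s = Phi P b t \<longleftrightarrow> (\<exists>W. openin T W \<and> P \<in> W \<and> W \<subseteq> D s \<inter> D t \<and> (\<forall>q\<in>W. sec a s q = sec b t q))"
    unfolding Phi_def by (rule gs_eq[OF o(1) PD(1) sc(1) o(2) PD(2) sc(2)])
  also have "\<dots> \<longleftrightarrow> fq P a s = fq P b t"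
  proof
    assume "\<exists>W. openin T W \<and> P \<in> W \<and> W \<subseteq> D s \<inter> D t \<and> (\<forall>q\<in>W. sec a s q = sec b t q)"
    then obtain W where W: "P \<in> W" "\<forall>q\<in>W. sec a s q = sec b t q" by blast
    have "sec a s P = sec b t P" using W by blast
    then have "gp P (D s) a s = gp P (D t) b t" using sec_at PD by simp
    then show "fq P a s = fq P b t" using gp_eq[OF o(1) PD(1) ab(1) SD(1) o(2) PD(2) ab(2) SD(2)] by blast
  next
    assume "fq P a s = fq P b t"
    then obtain u where u: "u \<in> A - P" "u \<odot> (t \<odot> a) = u \<odot> (s \<odot> b)"
      using frac_eq[OF mset_compl[OF PX] ab(1) st(1) ab(2) st(2)] by blast
    have uA: "u \<in> A" using u by blast
    define W where "W = D s \<inter> D t \<inter> D u"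
    have W: "openin T W" "P \<in> W" "W \<subseteq> D s \<inter> D t" unfolding W_def
      using openin_Int[OF openin_Int[OF o] open_D[OF uA]] PD in_D[OF PX u(1)] by auto
    have "\<forall>q\<in>W. sec a s q = sec b t q"
    proof
      fix q assume q: "q \<in> W"
      then have qq: "q \<in> D s" "q \<in> D t" "q \<in> D u" "q \<in> X" unfolding W_def basic_open_def by auto
      have "u \<in> A - q" "s \<in> A - q" "t \<in> A - q" using qq sA uA unfolding basic_open_def by auto
      then have "fq q a s = fq q b t"
        using frac_eqI[OF mset_compl[OF qq(4)] ab(1) _ ab(2) _ _ u(2)] by blast
      then have "gp q (D s) a s = gp q (D t) b t"
        using gp_eq[OF o(1) qq(1) ab(1) SD(1) o(2) qq(2) ab(2) SD(2)] by blast
      then show "sec a s q = sec b t q" using sec_at qq by simp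
    qed
    then show "\<exists>W. openin T W \<and> P \<in> W \<and> W \<subseteq> D s \<inter> D t \<and> (\<forall>q\<in>W. sec a s q = sec b t q)"
      using W by blast
  qed
  finally show ?thesis .
qed

lemma phi_surj: assumes PX: "P \<in> X" and G: "G \<in> pcarrier (SS P)"
  shows "\<exists>a s. a \<in> A \<and> s \<in> A - P \<and> G = Phi P a s"
proof -
  obtain U \<sigma> where U: "G = gs P U \<sigma>" "openin T U" "P \<in> U" "\<sigma> \<in> pcarrier (Fs U)"
    using G unfolding SS_carrier by blast
  obtain V a s where v: "openin T V" "P \<in> V" "V \<subseteq> U" "a \<in> A" "s \<in> SO V" "\<forall>r\<in>V. \<sigma> r = gp r V a s"
    using Fs_local[OF U(4) U(3)] by (elim exE conjE) (rule that; assumption)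
  have VX: "V \<subseteq> X" using open_sub v(1) .
  have sA: "s \<in> A" and VD: "V \<subseteq> D s" using SO_iff[OF VX] v(5) by auto
  have sP: "s \<in> A - P" using SO_compl[OF v(2)] v(5) by blast
  have o: "openin T (D s)" using open_D sA .
  have PD: "P \<in> D s" using in_D PX sP .
  have sc: "sec a s \<in> pcarrier (Fs (D s))" using sec_in v(4) sA .
  have "\<forall>q\<in>V. \<sigma> q = sec a s q"
  proof
    fix q assume q: "q \<in> V"
    have "\<sigma> q = gp q V a s" using v(6) q by blast
    also have "\<dots> = gp q (D s) a s"
      using gp_restrict[OF v(1) q VD o v(4) s_SO_D[OF sA]] by simp
    also have "\<dots> = sec a s q" using sec_at q VD by auto
    finally show "\<sigma> q = sec a s q" .
  qed
  then have "gs P U \<sigma> = gs P (D s) (sec a s)"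
    using gs_eq[OF U(2,3,4) o PD sc] v(1,2,3) VD by blast
  then show ?thesis using U(1) v(4) sP unfolding Phi_def by blast
qed


lemma sec_summ: assumes PX: "P \<in> X" and ab: "a \<in> A" "b \<in> A" and sA: "s \<in> A" "t \<in> A"
  and u: "u \<in> A" "summ (u \<odot> (t \<odot> a)) (u \<odot> (s \<odot> b))"
  shows "psummable (Fs (D s \<inter> D t \<inter> D u)) (sheafify_res (D s) (D s \<inter> D t \<inter> D u) (sec a s))
            (sheafify_res (D t) (D s \<inter> D t \<inter> D u) (sec b t))"
  unfolding Fs_summ
proof
  fix q assume q: "q \<in> D s \<inter> D t \<inter> D u"
  then have qq: "q \<in> D s" "q \<in> D t" "q \<in> D u" by auto
  have uq: "u \<in> A - q" using qq(3) u unfolding basic_open_def by blast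
  have o: "openin T (D s)" "openin T (D t)" using open_D sA by auto
  have "psummable (PS q) (gp q (D s) a s) (gp q (D t) b t)"
    using ps_summ[OF o(1) qq(1) ab(1) s_SO_D[OF sA(1)] o(2) qq(2) ab(2) s_SO_D[OF sA(2)]] uq u(2) by blast
  then show "psummable (PS q) (sheafify_res (D s) (D s \<inter> D t \<inter> D u) (sec a s) q)
            (sheafify_res (D t) (D s \<inter> D t \<inter> D u) (sec b t) q)"
    using q qq unfolding sheafify_res_def sec_def by simp
qed

lemma phi_mul: assumes PX: "P \<in> X" and ab: "a \<in> A" "b \<in> A" and st: "s \<in> A - P" "t \<in> A - P"
  shows "pmul (SS P) (Phi P a s) (Phi P b t) = Phi P (a \<odot> b) (s \<odot> t)"
proof -
  have sA: "s \<in> A" "t \<in> A" using st by auto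
  have o: "openin T (D s)" "openin T (D t)" using open_D sA by auto
  have PD: "P \<in> D s" "P \<in> D t" using in_D PX st by auto
  have sc: "sec a s \<in> pcarrier (Fs (D s))" "sec b t \<in> pcarrier (Fs (D t))" using sec_in ab sA by auto
  have SD: "s \<in> SO (D s)" "t \<in> SO (D t)" using s_SO_D sA by auto
  have stA: "s \<odot> t \<in> A" using sA by simp
  have Dst: "D (s \<odot> t) = D s \<inter> D t" using D_mul sA by simp
  have key: "K = Phi P (a \<odot> b) (s \<odot> t)"
    if h: "Phi P a s = gs P U \<sigma>" "Phi P b t = gs P V \<tau>" "openin T U" "P \<in> U" "\<sigma> \<in> pcarrier (Fs U)"
      "openin T V" "P \<in> V" "\<tau> \<in> pcarrier (Fs V)"
      "K = gs P (U \<inter> V) (pmul (Fs (U \<inter> V)) (sheafify_res U (U \<inter> V) \<sigma>) (sheafify_res V (U \<inter> V) \<tau>))"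
    for K U \<sigma> V \<tau>
  proof -
    have e1: "gs P (D s) (sec a s) = gs P U \<sigma>" using h(1) unfolding Phi_def .
    obtain W1 where w1: "openin T W1" "P \<in> W1" "W1 \<subseteq> D s \<inter> U" "\<forall>q\<in>W1. sec a s q = \<sigma> q"
      using iffD1[OF gs_eq[OF o(1) PD(1) sc(1) h(3,4,5)] e1] by (elim exE conjE) (rule that; assumption)
    have e2: "gs P (D t) (sec b t) = gs P V \<tau>" using h(2) unfolding Phi_def .
    obtain W2 where w2: "openin T W2" "P \<in> W2" "W2 \<subseteq> D t \<inter> V" "\<forall>q\<in>W2. sec b t q = \<tau> q"
      using iffD1[OF gs_eq[OF o(2) PD(2) sc(2) h(6,7,8)] e2] by (elim exE conjE) (rule that; assumption)
    define W where "W = W1 \<inter> W2"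
    have W: "openin T W" "P \<in> W" "W \<subseteq> (U \<inter> V) \<inter> D (s \<odot> t)"
      unfolding W_def Dst using openin_Int[OF w1(1) w2(1)] w1(2,3) w2(2,3) by auto
    have kc: "pmul (Fs (U \<inter> V)) (sheafify_res U (U \<inter> V) \<sigma>) (sheafify_res V (U \<inter> V) \<tau>) \<in> pcarrier (Fs (U \<inter> V))"
      using C_mul[OF h(3,5,6,8)] .
    have sc2: "sec (a \<odot> b) (s \<odot> t) \<in> pcarrier (Fs (D (s \<odot> t)))" using sec_in ab stA by simp
    have PUV: "P \<in> U \<inter> V" using h(4,7) by blast
    have PDst: "P \<in> D (s \<odot> t)" using PD Dst by blast
    have "\<forall>q\<in>W. pmul (Fs (U \<inter> V)) (sheafify_res U (U \<inter> V) \<sigma>) (sheafify_res V (U \<inter> V) \<tau>) q = sec (a \<odot> b) (s \<odot> t) q"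
    proof
      fix q assume q: "q \<in> W"
      then have qq: "q \<in> W1" "q \<in> W2" "q \<in> U \<inter> V" "q \<in> D s" "q \<in> D t" "q \<in> D (s \<odot> t)"
        unfolding W_def using w1(3) w2(3) Dst by auto
      have "pmul (Fs (U \<inter> V)) (sheafify_res U (U \<inter> V) \<sigma>) (sheafify_res V (U \<inter> V) \<tau>) q = pmul (PS q) (\<sigma> q) (\<tau> q)"
        unfolding Fs_mul sheafify_res_def using qq(3) by simp
      also have "\<sigma> q = gp q (D s) a s" using w1(4) qq(1) sec_at[OF qq(4)] by metis
      also have "\<tau> q = gp q (D t) b t" using w2(4) qq(2) sec_at[OF qq(5)] by metis
      also have "pmul (PS q) (gp q (D s) a s) (gp q (D t) b t) = gp q (D (s \<odot> t)) (a \<odot> b) (s \<odot> t)"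
        using ps_mul[OF o(1) qq(4) ab(1) SD(1) o(2) qq(5) ab(2) SD(2) open_D[OF stA] qq(6) s_SO_D[OF stA]] .
      also have "\<dots> = sec (a \<odot> b) (s \<odot> t) q" using sec_at[OF qq(6)] by simp
      finally show "pmul (Fs (U \<inter> V)) (sheafify_res U (U \<inter> V) \<sigma>) (sheafify_res V (U \<inter> V) \<tau>) q = sec (a \<odot> b) (s \<odot> t) q" .
    qed
    then have "gs P (U \<inter> V) (pmul (Fs (U \<inter> V)) (sheafify_res U (U \<inter> V) \<sigma>) (sheafify_res V (U \<inter> V) \<tau>))
         = gs P (D (s \<odot> t)) (sec (a \<odot> b) (s \<odot> t))"
      using iffD2[OF gs_eq[OF openin_Int[OF h(3,6)] PUV kc open_D[OF stA] PDst sc2]] W by blast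
    then show ?thesis using h(9) unfolding Phi_def by simp
  qed
  have ex: "\<exists>U \<sigma> V \<tau>. Phi P a s = gs P U \<sigma> \<and> Phi P b t = gs P V \<tau>
        \<and> openin T U \<and> P \<in> U \<and> \<sigma> \<in> pcarrier (Fs U) \<and> openin T V \<and> P \<in> V \<and> \<tau> \<in> pcarrier (Fs V)
        \<and> K0 = gs P (U \<inter> V) (pmul (Fs (U \<inter> V)) (sheafify_res U (U \<inter> V) \<sigma>) (sheafify_res V (U \<inter> V) \<tau>))"
    if "K0 = gs P (D s \<inter> D t) (pmul (Fs (D s \<inter> D t)) (sheafify_res (D s) (D s \<inter> D t) (sec a s)) (sheafify_res (D t) (D s \<inter> D t) (sec b t)))"
    for K0
    apply (rule exI[of _ "D s"], rule exI[of _ "sec a s"], rule exI[of _ "D t"], rule exI[of _ "sec b t"])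
    unfolding Phi_def by (intro conjI refl that o PD sc)
  show ?thesis
    unfolding SS_mul
    apply (rule some_eqI)
    apply (rule exI, rule ex[OF refl])
    apply (elim exE conjE)
    apply (rule key[rotated 8])
    apply assumption+
    done
qed


lemma phi_summ: assumes PX: "P \<in> X" and ab: "a \<in> A" "b \<in> A" and st: "s \<in> A - P" "t \<in> A - P"
  shows "psummable (SS P) (Phi P a s) (Phi P b t) \<longleftrightarrow> (\<exists>u\<in>A - P. summ (u \<odot> (t \<odot> a)) (u \<odot> (s \<odot> b)))"
proof -
  have sA: "s \<in> A" "t \<in> A" using st by auto
  have o: "openin T (D s)" "openin T (D t)" using open_D sA by auto
  have PD: "P \<in> D s" "P \<in> D t" using in_D PX st by auto
  have sc: "sec a s \<in> pcarrier (Fs (D s))" "sec b t \<in> pcarrier (Fs (D t))" using sec_in ab sA by auto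
  have SD: "s \<in> SO (D s)" "t \<in> SO (D t)" using s_SO_D sA by auto
  show ?thesis
  proof
    assume "psummable (SS P) (Phi P a s) (Phi P b t)"
    then obtain U \<sigma> V \<tau> W where h: "Phi P a s = gs P U \<sigma>" "Phi P b t = gs P V \<tau>"
        "openin T U" "P \<in> U" "\<sigma> \<in> pcarrier (Fs U)" "openin T V" "P \<in> V" "\<tau> \<in> pcarrier (Fs V)"
        "openin T W" "P \<in> W" "W \<subseteq> U \<inter> V" "psummable (Fs W) (sheafify_res U W \<sigma>) (sheafify_res V W \<tau>)"
      unfolding SS_summ by (elim exE conjE) (rule that; assumption)
    have e1: "gs P (D s) (sec a s) = gs P U \<sigma>" using h(1) unfolding Phi_def .
    obtain W1 where w1: "openin T W1" "P \<in> W1" "W1 \<subseteq> D s \<inter> U" "\<forall>q\<in>W1. sec a s q = \<sigma> q"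
      using iffD1[OF gs_eq[OF o(1) PD(1) sc(1) h(3,4,5)] e1] by (elim exE conjE) (rule that; assumption)
    have e2: "gs P (D t) (sec b t) = gs P V \<tau>" using h(2) unfolding Phi_def .
    obtain W2 where w2: "openin T W2" "P \<in> W2" "W2 \<subseteq> D t \<inter> V" "\<forall>q\<in>W2. sec b t q = \<tau> q"
      using iffD1[OF gs_eq[OF o(2) PD(2) sc(2) h(6,7,8)] e2] by (elim exE conjE) (rule that; assumption)
    have "psummable (PS P) (sheafify_res U W \<sigma> P) (sheafify_res V W \<tau> P)"
      using h(12) h(10) unfolding Fs_summ by blast
    then have "psummable (PS P) (\<sigma> P) (\<tau> P)" unfolding sheafify_res_def using h(10) by simp
    moreover have "\<sigma> P = gp P (D s) a s" using w1(4) w1(2) sec_at[OF PD(1)] by metis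
    moreover have "\<tau> P = gp P (D t) b t" using w2(4) w2(2) sec_at[OF PD(2)] by metis
    ultimately have "psummable (PS P) (gp P (D s) a s) (gp P (D t) b t)" by simp
    then show "\<exists>u\<in>A - P. summ (u \<odot> (t \<odot> a)) (u \<odot> (s \<odot> b))"
      using ps_summ[OF o(1) PD(1) ab(1) SD(1) o(2) PD(2) ab(2) SD(2)] by blast
  next
    assume "\<exists>u\<in>A - P. summ (u \<odot> (t \<odot> a)) (u \<odot> (s \<odot> b))"
    then obtain u where u: "u \<in> A - P" "summ (u \<odot> (t \<odot> a)) (u \<odot> (s \<odot> b))" by blast
    have uA: "u \<in> A" using u by blast
    define W where "W = D s \<inter> D t \<inter> D u"
    have W: "openin T W" "P \<in> W" "W \<subseteq> D s \<inter> D t" unfolding W_def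
      using openin_Int[OF openin_Int[OF o] open_D[OF uA]] PD in_D[OF PX u(1)] by auto
    have sm: "psummable (Fs W) (sheafify_res (D s) W (sec a s)) (sheafify_res (D t) W (sec b t))"
      unfolding W_def using sec_summ[OF PX ab sA uA u(2)] .
    show "psummable (SS P) (Phi P a s) (Phi P b t)"
      unfolding SS_summ Phi_def
      apply (rule exI[of _ "D s"], rule exI[of _ "sec a s"], rule exI[of _ "D t"], rule exI[of _ "sec b t"], rule exI[of _ W])
      by (intro conjI refl o PD sc W sm)
  qed
qed

lemma phi_add: assumes PX: "P \<in> X" and ab: "a \<in> A" "b \<in> A" and st: "s \<in> A - P" "t \<in> A - P"
  and u: "u \<in> A - P" "summ (u \<odot> (t \<odot> a)) (u \<odot> (s \<odot> b))"
  shows "padd (SS P) (Phi P a s) (Phi P b t) = Phi P (u \<odot> (t \<odot> a) \<oplus> u \<odot> (s \<odot> b)) (u \<odot> (s \<odot> t))"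
proof -
  have sA: "s \<in> A" "t \<in> A" using st by auto
  have uA: "u \<in> A" using u by blast
  have o: "openin T (D s)" "openin T (D t)" using open_D sA by auto
  have PD: "P \<in> D s" "P \<in> D t" "P \<in> D u" using in_D PX st u by auto
  have sc: "sec a s \<in> pcarrier (Fs (D s))" "sec b t \<in> pcarrier (Fs (D t))" using sec_in ab sA by auto
  have SD: "s \<in> SO (D s)" "t \<in> SO (D t)" using s_SO_D sA by auto
  define M where "M = u \<odot> (s \<odot> t)"
  define N where "N = u \<odot> (t \<odot> a) \<oplus> u \<odot> (s \<odot> b)"
  have MA: "M \<in> A" unfolding M_def using uA sA by simp
  have NA: "N \<in> A" unfolding N_def using summ_in[OF u(2)] by blast
  have DM: "D M = D u \<inter> (D s \<inter> D t)" unfolding M_def using D_mul uA sA by simp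
  have key: "K = Phi P N M"
    if h: "Phi P a s = gs P U \<sigma>" "Phi P b t = gs P V \<tau>" "openin T U" "P \<in> U" "\<sigma> \<in> pcarrier (Fs U)"
      "openin T V" "P \<in> V" "\<tau> \<in> pcarrier (Fs V)" "openin T W" "P \<in> W" "W \<subseteq> U \<inter> V"
      "psummable (Fs W) (sheafify_res U W \<sigma>) (sheafify_res V W \<tau>)"
      "K = gs P W (padd (Fs W) (sheafify_res U W \<sigma>) (sheafify_res V W \<tau>))"
    for K U \<sigma> V \<tau> W
  proof -
    have e1: "gs P (D s) (sec a s) = gs P U \<sigma>" using h(1) unfolding Phi_def .
    obtain W1 where w1: "openin T W1" "P \<in> W1" "W1 \<subseteq> D s \<inter> U" "\<forall>q\<in>W1. sec a s q = \<sigma> q"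
      using iffD1[OF gs_eq[OF o(1) PD(1) sc(1) h(3,4,5)] e1] by (elim exE conjE) (rule that; assumption)
    have e2: "gs P (D t) (sec b t) = gs P V \<tau>" using h(2) unfolding Phi_def .
    obtain W2 where w2: "openin T W2" "P \<in> W2" "W2 \<subseteq> D t \<inter> V" "\<forall>q\<in>W2. sec b t q = \<tau> q"
      using iffD1[OF gs_eq[OF o(2) PD(2) sc(2) h(6,7,8)] e2] by (elim exE conjE) (rule that; assumption)
    define W' where "W' = W \<inter> W1 \<inter> W2 \<inter> D u"
    have W': "openin T W'" "P \<in> W'" "W' \<subseteq> W \<inter> D M"
      unfolding W'_def DM using openin_Int[OF openin_Int[OF openin_Int[OF h(9) w1(1)] w2(1)] open_D[OF uA]]
        h(10) w1(2,3) w2(2,3) PD(3) by auto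
    have smq: "\<forall>q\<in>W. psummable (PS q) (\<sigma> q) (\<tau> q)"
    proof
      fix q assume q: "q \<in> W"
      have "psummable (PS q) (sheafify_res U W \<sigma> q) (sheafify_res V W \<tau> q)"
        using h(12) q unfolding Fs_summ by blast
      then show "psummable (PS q) (\<sigma> q) (\<tau> q)" unfolding sheafify_res_def using q by simp
    qed
    have kc: "padd (Fs W) (sheafify_res U W \<sigma>) (sheafify_res V W \<tau>) \<in> pcarrier (Fs W)"
      using C_add[OF h(3,5,6,8,9,11) smq] .
    have sc2: "sec N M \<in> pcarrier (Fs (D M))" using sec_in NA MA by simp
    have PDM: "P \<in> D M" using PD DM by blast
    have "\<forall>q\<in>W'. padd (Fs W) (sheafify_res U W \<sigma>) (sheafify_res V W \<tau>) q = sec N M q"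
    proof
      fix q assume q: "q \<in> W'"
      then have qq: "q \<in> W1" "q \<in> W2" "q \<in> W" "q \<in> D s" "q \<in> D t" "q \<in> D u" "q \<in> D M"
        unfolding W'_def using w1(3) w2(3) DM by auto
      have uq: "u \<in> A - q" using qq(6) uA unfolding basic_open_def by blast
      have "padd (Fs W) (sheafify_res U W \<sigma>) (sheafify_res V W \<tau>) q = padd (PS q) (\<sigma> q) (\<tau> q)"
        unfolding Fs_add sheafify_res_def using qq(3) by simp
      also have "\<sigma> q = gp q (D s) a s" using w1(4) qq(1) sec_at[OF qq(4)] by metis
      also have "\<tau> q = gp q (D t) b t" using w2(4) qq(2) sec_at[OF qq(5)] by metis
      also have "padd (PS q) (gp q (D s) a s) (gp q (D t) b t) = gp q (D M) N M"
        unfolding N_def M_def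
        using ps_add[OF o(1) qq(4) ab(1) SD(1) o(2) qq(5) ab(2) SD(2) uq u(2) open_D[OF MA[unfolded M_def]]
           qq(7)[unfolded M_def] s_SO_D[OF MA[unfolded M_def]]] .
      also have "\<dots> = sec N M q" using sec_at[OF qq(7)] by simp
      finally show "padd (Fs W) (sheafify_res U W \<sigma>) (sheafify_res V W \<tau>) q = sec N M q" .
    qed
    then have "gs P W (padd (Fs W) (sheafify_res U W \<sigma>) (sheafify_res V W \<tau>)) = gs P (D M) (sec N M)"
      using iffD2[OF gs_eq[OF h(9,10) kc open_D[OF MA] PDM sc2]] W' by blast
    then show ?thesis using h(13) unfolding Phi_def by simp
  qed
  define W0 where "W0 = D s \<inter> D t \<inter> D u"
  have W0: "openin T W0" "P \<in> W0" "W0 \<subseteq> D s \<inter> D t" unfolding W0_def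
    using openin_Int[OF openin_Int[OF o] open_D[OF uA]] PD by auto
  have sm: "psummable (Fs W0) (sheafify_res (D s) W0 (sec a s)) (sheafify_res (D t) W0 (sec b t))"
    unfolding W0_def using sec_summ[OF PX ab sA uA u(2)] .
  have ex: "\<exists>U \<sigma> V \<tau> W. Phi P a s = gs P U \<sigma> \<and> Phi P b t = gs P V \<tau>
        \<and> openin T U \<and> P \<in> U \<and> \<sigma> \<in> pcarrier (Fs U) \<and> openin T V \<and> P \<in> V \<and> \<tau> \<in> pcarrier (Fs V)
        \<and> openin T W \<and> P \<in> W \<and> W \<subseteq> U \<inter> V
        \<and> psummable (Fs W) (sheafify_res U W \<sigma>) (sheafify_res V W \<tau>)
        \<and> K0 = gs P W (padd (Fs W) (sheafify_res U W \<sigma>) (sheafify_res V W \<tau>))"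
    if "K0 = gs P W0 (padd (Fs W0) (sheafify_res (D s) W0 (sec a s)) (sheafify_res (D t) W0 (sec b t)))"
    for K0
    apply (rule exI[of _ "D s"], rule exI[of _ "sec a s"], rule exI[of _ "D t"], rule exI[of _ "sec b t"], rule exI[of _ W0])
    unfolding Phi_def by (intro conjI refl that o PD sc W0 sm)
  show ?thesis
    unfolding SS_add N_def[symmetric] M_def[symmetric]
    apply (rule some_eqI)
    apply (rule exI, rule ex[OF refl])
    apply (elim exE conjE)
    apply (rule key[rotated 12])
    apply assumption+
    done
qed


lemma main_iso: assumes PX: "P \<in> X"
  shows "\<exists>f. pring_iso (localization R (A - P)) (SS P) f"
proof -
  have M: "mset (A - P)" using mset_compl[OF PX] .
  have oneP: "one \<in> A - P" using prime_one[OF PX] by simp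
  define f where "f Y = (SOME K. \<exists>a s. a \<in> A \<and> s \<in> A - P \<and> Y = fq P a s \<and> K = Phi P a s)" for Y
  have f_eq: "f (fq P a s) = Phi P a s" if "a \<in> A" "s \<in> A - P" for a s
    unfolding f_def
  proof (rule some_eqI)
    show "\<exists>K a2 s2. a2 \<in> A \<and> s2 \<in> A - P \<and> fq P a s = fq P a2 s2 \<and> K = Phi P a2 s2"
      using that by blast
  next
    fix K assume "\<exists>a2 s2. a2 \<in> A \<and> s2 \<in> A - P \<and> fq P a s = fq P a2 s2 \<and> K = Phi P a2 s2"
    then obtain a2 s2 where h: "a2 \<in> A" "s2 \<in> A - P" "fq P a s = fq P a2 s2" "K = Phi P a2 s2" by blast
    show "K = Phi P a s" using phi_eq[OF PX h(1) that(1) h(2) that(2)] h by simp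
  qed
  have LC: "pcarrier (localization R (A - P)) = {fq P a s | a s. a \<in> A \<and> s \<in> A - P}"
    using loc_carrier .
  have hom: "pring_hom (localization R (A - P)) (SS P) f"
    unfolding pring_hom_def
  proof (intro conjI ballI allI impI)
    show "f ` pcarrier (localization R (A - P)) \<subseteq> pcarrier (SS P)"
      unfolding LC using f_eq phi_in[OF PX] by auto
    show "f (pzero (localization R (A - P))) = pzero (SS P)"
      unfolding loc_zero phi_zero using f_eq[OF zero_in oneP] .
    show "f (pone (localization R (A - P))) = pone (SS P)"
      unfolding loc_one phi_one using f_eq[OF one_in oneP] .
  next
    fix x y assume x: "x \<in> pcarrier (localization R (A - P))" and y: "y \<in> pcarrier (localization R (A - P))"
    obtain a s where xa: "x = fq P a s" "a \<in> A" "s \<in> A - P" using x unfolding LC by blast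
    obtain b t where yb: "y = fq P b t" "b \<in> A" "t \<in> A - P" using y unfolding LC by blast
    have stP: "s \<odot> t \<in> A - P" using msetD(3)[OF M xa(3) yb(3)] .
    show "f (pmul (localization R (A - P)) x y) = pmul (SS P) (f x) (f y)"
      unfolding xa(1) yb(1) loc_mul[OF M xa(2,3) yb(2,3)] f_eq[OF xa(2,3)] f_eq[OF yb(2,3)]
        f_eq[OF mul_in[OF xa(2) yb(2)] stP] phi_mul[OF PX xa(2) yb(2) xa(3) yb(3)] ..
  next
    fix x y assume "psummable (localization R (A - P)) x y"
    then obtain a s b t u where h: "x = fq P a s" "y = fq P b t" "a \<in> A" "s \<in> A - P" "b \<in> A" "t \<in> A - P"
      "u \<in> A - P" "summ (u \<odot> (t \<odot> a)) (u \<odot> (s \<odot> b))"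
      unfolding loc_summable_def by blast
    show "psummable (SS P) (f x) (f y)"
      unfolding h(1,2) f_eq[OF h(3,4)] f_eq[OF h(5,6)] phi_summ[OF PX h(3,5,4,6)] using h(7,8) by blast
    have MP: "u \<odot> (s \<odot> t) \<in> A - P" using msetD(3)[OF M h(7) msetD(3)[OF M h(4) h(6)]] .
    have NA: "u \<odot> (t \<odot> a) \<oplus> u \<odot> (s \<odot> b) \<in> A" using summ_in[OF h(8)] by blast
    show "f (padd (localization R (A - P)) x y) = padd (SS P) (f x) (f y)"
      unfolding h(1,2) loc_add[OF M h(3,4,5,6,7,8)] f_eq[OF h(3,4)] f_eq[OF h(5,6)] f_eq[OF NA MP]
        phi_add[OF PX h(3,5,4,6,7,8)] ..
  qed
  have inj: "inj_on f (pcarrier (localization R (A - P)))"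
  proof (rule inj_onI)
    fix x y assume x: "x \<in> pcarrier (localization R (A - P))" and y: "y \<in> pcarrier (localization R (A - P))"
      and e: "f x = f y"
    obtain a s where xa: "x = fq P a s" "a \<in> A" "s \<in> A - P" using x unfolding LC by blast
    obtain b t where yb: "y = fq P b t" "b \<in> A" "t \<in> A - P" using y unfolding LC by blast
    have "Phi P a s = Phi P b t" using e unfolding xa(1) yb(1) f_eq[OF xa(2,3)] f_eq[OF yb(2,3)] .
    then show "x = y" unfolding xa(1) yb(1) using phi_eq[OF PX xa(2) yb(2) xa(3) yb(3)] by blast
  qed
  have img: "f ` pcarrier (localization R (A - P)) = pcarrier (SS P)"
  proof
    show "f ` pcarrier (localization R (A - P)) \<subseteq> pcarrier (SS P)"
      using hom unfolding pring_hom_def by blast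
    show "pcarrier (SS P) \<subseteq> f ` pcarrier (localization R (A - P))"
    proof
      fix G assume "G \<in> pcarrier (SS P)"
      then obtain a s where h: "a \<in> A" "s \<in> A - P" "G = Phi P a s" using phi_surj[OF PX] by blast
      then have "G = f (fq P a s)" using f_eq by simp
      moreover have "fq P a s \<in> pcarrier (localization R (A - P))" unfolding LC using h by blast
      ultimately show "G \<in> f ` pcarrier (localization R (A - P))" by blast
    qed
  qed
  have refl: "\<forall>x\<in>pcarrier (localization R (A - P)). \<forall>y\<in>pcarrier (localization R (A - P)).
      psummable (SS P) (f x) (f y) \<longrightarrow> psummable (localization R (A - P)) x y"
  proof (intro ballI impI)
    fix x y assume x: "x \<in> pcarrier (localization R (A - P))" and y: "y \<in> pcarrier (localization R (A - P))"
      and sm: "psummable (SS P) (f x) (f y)"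
    obtain a s where xa: "x = fq P a s" "a \<in> A" "s \<in> A - P" using x unfolding LC by blast
    obtain b t where yb: "y = fq P b t" "b \<in> A" "t \<in> A - P" using y unfolding LC by blast
    have "\<exists>u\<in>A - P. summ (u \<odot> (t \<odot> a)) (u \<odot> (s \<odot> b))"
      using sm unfolding xa(1) yb(1) f_eq[OF xa(2,3)] f_eq[OF yb(2,3)] phi_summ[OF PX xa(2) yb(2) xa(3) yb(3)] .
    then show "psummable (localization R (A - P)) x y"
      unfolding xa(1) yb(1) using loc_summ[OF M xa(2,3) yb(2,3)] by blast
  qed
  show ?thesis unfolding pring_iso_def bij_betw_def using hom inj img refl by blast
qed

end

theorem mainTheorem11:
  fixes R :: "'a pring" and P :: "'a set"
  assumes "partial_ring R"
    and "P \<in> spec R"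
  shows "\<exists>f. pring_iso (localization R (pcarrier R - P)) (struct_stalk R P) f"
  using pr.main_iso[OF pr.intro[OF assms(1)] assms(2)] .

end
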